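(* Let $K$ be a field of characteristic zero and let $A_1 = K\langle X, Y \mid YX - XY = 1\rangle$ be the first Weyl algebra over $K$. Let $P, Q \in A_1$ with $m(P) \leq 2$ and $m(Q) \leq 2$. If $PQ - QP = 1$, then there exists a $K$-algebra automorphism $\tau$ of $A_1$ such that $P = \tau(Y)$ and $Q = \tau(X)$.
   Context: The Weyl algebra $A_1$ is $\mathbb{Z}$-graded, $A_1 = \bigoplus_{i\in\mathbb{Z}} A_{1,i}$ with $A_{1,i}A_{1,j}\subseteq A_{1,i+j}$, where, writing $H = YX$, one has $A_{1,0} = K[H]$ and, for $i \geq 1$, $A_{1,i} = K[H]X^i$ and $A_{1,-i} = K[H]Y^i$. For a nonzero element $a \in A_1$, its mass $m(a)$ is the number of nonzero homogeneous components of $a$ with respect to this grading. *)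

theory Defs
  imports "HOL-Computational_Algebra.Polynomial"
begin

text \<open>An element is written uniquely as  sum_j p_j(X) Y^j  with p_j in K[X]
(X to the left of Y); we store it as the polynomial in Y with coefficients in K[X],
i.e. as a value of type  'a poly poly  (coeff (coeff P j) i is the coefficient of X^i Y^j).
Addition and K-scalar multiplication are those of 'a poly poly; the (non-commutative)
product is given by the normal-ordering rule coming from YX - XY = 1:
  (p Y^b)(q Y^d) = sum_k (b choose k) p q^(k) Y^(b+d-k),
where q^(k) is the k-th formal derivative of q.\<close>

definition weyl_mult :: "'a::field_char_0 poly poly \<Rightarrow> 'a poly poly \<Rightarrow> 'a poly poly" where
  "weyl_mult P Q =
     (\<Sum>b\<le>degree P. \<Sum>k\<le>b. \<Sum>d\<le>degree Q.
        monom (smult (of_nat (b choose k)) (coeff P b * (pderiv ^^ k) (coeff Q d))) (b + d - k))"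

definition weyl_X :: "'a::field_char_0 poly poly" where
  "weyl_X = monom [:0, 1:] 0"

definition weyl_Y :: "'a::field_char_0 poly poly" where
  "weyl_Y = monom 1 1"

definition weyl_aut :: "('a::field_char_0 poly poly \<Rightarrow> 'a poly poly) \<Rightarrow> bool" where
  "weyl_aut \<tau> \<longleftrightarrow> bij \<tau>
     \<and> (\<forall>P Q. \<tau> (P + Q) = \<tau> P + \<tau> Q)
     \<and> (\<forall>c P. \<tau> (smult [:c:] P) = smult [:c:] (\<tau> P))
     \<and> (\<forall>P Q. \<tau> (weyl_mult P Q) = weyl_mult (\<tau> P) (\<tau> Q))
     \<and> \<tau> 1 = 1"

text \<open>Mass: number of nonzero homogeneous components for the Z-grading with
deg X = 1, deg Y = -1; the monomial X^i Y^j is homogeneous of degree i - j.\<close>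
definition weyl_mass :: "'a::field_char_0 poly poly \<Rightarrow> nat" where
  "weyl_mass P = card {int i - int j | i j. coeff (coeff P j) i \<noteq> 0}"

end

theory Submission
  imports Defs
begin


lemma pderiv_sum': "pderiv (sum f A) = (\<Sum>x\<in>A. pderiv (f x))"
  by (induction A rule: infinite_finite_induct) (simp_all add: pderiv_add)

lemma leibniz_pderiv:
  fixes p q :: "'a::field_char_0 poly"
  shows "(pderiv ^^ n) (p * q) = (\<Sum>k\<le>n. smult (of_nat (n choose k)) ((pderiv ^^ k) p * (pderiv ^^ (n - k)) q))"
proof (induction n)
  case 0
  then show ?case by simp
next
  case (Suc n)
  have "(pderiv ^^ Suc n) (p * q) = pderiv ((pderiv ^^ n) (p * q))" by simp
  also have "\<dots> = (\<Sum>k\<le>n. smult (of_nat (n choose k)) ((pderiv ^^ Suc k) p * (pderiv ^^ (n - k)) q))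
      + (\<Sum>k\<le>n. smult (of_nat (n choose k)) ((pderiv ^^ k) p * (pderiv ^^ Suc (n - k)) q))"
    unfolding Suc pderiv_sum'
    by (simp add: pderiv_smult pderiv_mult algebra_simps sum.distrib smult_add_right)
  also have "(\<Sum>k\<le>n. smult (of_nat (n choose k)) ((pderiv ^^ Suc k) p * (pderiv ^^ (n - k)) q))
      = (\<Sum>k\<le>Suc n. smult (of_nat (n choose (k - 1))) (if k = 0 then 0 else ((pderiv ^^ k) p * (pderiv ^^ (Suc n - k)) q)))"
    by (subst sum.atMost_Suc_shift) (simp del: funpow.simps)
  also have "(\<Sum>k\<le>n. smult (of_nat (n choose k)) ((pderiv ^^ k) p * (pderiv ^^ Suc (n - k)) q))
      = (\<Sum>k\<le>Suc n. smult (of_nat (n choose k)) ((pderiv ^^ k) p * (pderiv ^^ (Suc n - k)) q))"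
    by (simp del: funpow.simps add: Suc_diff_le)
  finally have e: "(pderiv ^^ Suc n) (p * q) = (\<Sum>k\<le>Suc n. smult (of_nat (n choose (k - 1))) (if k = 0 then 0 else ((pderiv ^^ k) p * (pderiv ^^ (Suc n - k)) q)))
      + (\<Sum>k\<le>Suc n. smult (of_nat (n choose k)) ((pderiv ^^ k) p * (pderiv ^^ (Suc n - k)) q))" .
  show ?case unfolding e sum.distrib[symmetric]
  proof (rule sum.cong[OF refl])
    fix k assume "k \<in> {..Suc n}"
    show "smult (of_nat (n choose (k - 1))) (if k = 0 then 0 else ((pderiv ^^ k) p * (pderiv ^^ (Suc n - k)) q))
      + smult (of_nat (n choose k)) ((pderiv ^^ k) p * (pderiv ^^ (Suc n - k)) q)
      = smult (of_nat (Suc n choose k)) ((pderiv ^^ k) p * (pderiv ^^ (Suc n - k)) q)"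
    proof (cases k)
      case 0 then show ?thesis by simp
    next
      case (Suc j) then show ?thesis by (simp add: smult_add_left[symmetric] del: funpow.simps)
    qed
  qed
qed

definition opw :: "'a::field_char_0 poly poly \<Rightarrow> 'a poly \<Rightarrow> 'a poly" where
  "opw A f = (\<Sum>j\<le>degree A. coeff A j * (pderiv ^^ j) f)"

lemma opw_le:
  assumes "degree A \<le> n"
  shows "opw A f = (\<Sum>j\<le>n. coeff A j * (pderiv ^^ j) f)"
  unfolding opw_def
  by (rule sum.mono_neutral_left) (use assms in \<open>auto simp: coeff_eq_0\<close>)

lemma opw_add: "opw (A + B) f = opw A f + opw B f"
proof -
  let ?n = "max (degree A) (max (degree B) (degree (A + B)))"
  show ?thesis
    by (subst (1 2 3) opw_le[of _ ?n]) (auto simp: sum.distrib algebra_simps)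
qed

lemma opw_0 [simp]: "opw 0 f = 0"
  by (simp add: opw_def)

lemma opw_sum: "opw (sum F S) f = (\<Sum>x\<in>S. opw (F x) f)"
  by (induction S rule: infinite_finite_induct) (simp_all add: opw_add)

lemma opw_monom [simp]: "opw (monom p j) f = p * (pderiv ^^ j) f"
proof -
  have "opw (monom p j) f = (\<Sum>i\<le>j. if j = i then p * (pderiv ^^ i) f else 0)"
    apply (subst opw_le[of _ j])
     apply (simp add: degree_monom_le)
    apply (rule sum.cong)
     apply (auto simp: coeff_monom)
    done
  also have "\<dots> = p * (pderiv ^^ j) f" by simp
  finally show ?thesis .
qed

lemma opw_smult: "opw (smult c A) f = c * opw A f"
  unfolding opw_def by (auto simp: sum_distrib_left mult_ac degree_smult_eq)

lemma opw_arg_add: "opw A (f + g) = opw A f + opw A g"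
  unfolding opw_def by (simp add: higher_pderiv_add sum.distrib algebra_simps)

lemma opw_arg_0 [simp]: "opw A 0 = 0"
  by (simp add: opw_def)

lemma opw_arg_sum: "opw A (sum F S) = (\<Sum>x\<in>S. opw A (F x))"
  by (induction S rule: infinite_finite_induct) (simp_all add: opw_arg_add)

lemma opw_mult: "opw (weyl_mult A B) f = opw A (opw B f)"
proof -
  have "opw (weyl_mult A B) f =
    (\<Sum>b\<le>degree A. \<Sum>k\<le>b. \<Sum>d\<le>degree B.
        smult (of_nat (b choose k)) (coeff A b * (pderiv ^^ k) (coeff B d) * (pderiv ^^ (b + d - k)) f))"
    unfolding weyl_mult_def opw_sum by simp
  also have "\<dots> = (\<Sum>b\<le>degree A. \<Sum>d\<le>degree B. \<Sum>k\<le>b.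
        coeff A b * (smult (of_nat (b choose k)) ((pderiv ^^ k) (coeff B d) * (pderiv ^^ (b - k)) ((pderiv ^^ d) f))))"
  proof (rule sum.cong[OF refl])
    fix b assume "b \<in> {..degree A}"
    show "(\<Sum>k\<le>b. \<Sum>d\<le>degree B.
        smult (of_nat (b choose k)) (coeff A b * (pderiv ^^ k) (coeff B d) * (pderiv ^^ (b + d - k)) f))
      = (\<Sum>d\<le>degree B. \<Sum>k\<le>b.
        coeff A b * (smult (of_nat (b choose k)) ((pderiv ^^ k) (coeff B d) * (pderiv ^^ (b - k)) ((pderiv ^^ d) f))))"
      apply (subst sum.swap)
      apply (rule sum.cong[OF refl])+
      subgoal for d k
      proof -
        assume "k \<in> {..b}"
        then have "b - k + d = b + d - k" by simp
        then have "(pderiv ^^ (b - k)) ((pderiv ^^ d) f) = (pderiv ^^ (b + d - k)) f"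
          by (metis funpow_add comp_apply)
        then show ?thesis by (simp del: funpow.simps add: mult_ac)
      qed
      done
  qed
  also have "\<dots> = opw A (opw B f)"
    unfolding opw_def[of A] opw_def[of B]
    by (simp add: higher_pderiv_sum leibniz_pderiv sum_distrib_left del: funpow.simps)
  finally show ?thesis .
qed

lemma higher_pderiv_gt_degree:
  fixes f :: "'a::field_char_0 poly"
  assumes "degree f < j"
  shows "(pderiv ^^ j) f = 0"
  by (rule poly_eqI) (use assms in \<open>simp add: coeff_higher_pderiv coeff_eq_0\<close>)

lemma higher_pderiv_monom_self:
  "(pderiv ^^ j) (monom (1::'a::field_char_0) j) = [:fact j:]"
proof (rule poly_eqI)
  fix n
  show "coeff ((pderiv ^^ j) (monom (1::'a) j)) n = coeff [:fact j:] n"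
    by (cases n) (simp_all add: coeff_higher_pderiv coeff_monom pochhammer_fact)
qed

lemma opw_diff: "opw (A - B) f = opw A f - opw B f"
  using opw_add[of "A - B" B f] by simp

lemma opw_zero_imp:
  assumes "\<And>f. opw C f = 0"
  shows "C = 0"
proof (rule ccontr)
  assume "C \<noteq> 0"
  then have ex: "\<exists>j. coeff C j \<noteq> 0" by (metis leading_coeff_0_iff)
  define j0 where "j0 = (LEAST j. coeff C j \<noteq> 0)"
  have c0: "coeff C j0 \<noteq> 0" unfolding j0_def by (rule LeastI_ex[OF ex])
  have lt: "j < j0 \<Longrightarrow> coeff C j = 0" for j unfolding j0_def using not_less_Least by blast
  have j0le: "j0 \<le> degree C" using c0 le_degree by blast
  have "opw C (monom 1 j0) = (\<Sum>j\<in>{j0}. coeff C j * (pderiv ^^ j) (monom 1 j0))"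
    unfolding opw_def
  proof (rule sum.mono_neutral_right)
    show "\<forall>i\<in>{..degree C} - {j0}. coeff C i * (pderiv ^^ i) (monom 1 j0) = 0"
    proof
      fix i assume "i \<in> {..degree C} - {j0}"
      then have "i < j0 \<or> i > j0" by auto
      then show "coeff C i * (pderiv ^^ i) (monom 1 j0) = 0"
        using lt higher_pderiv_gt_degree[of "monom (1::'a) j0" i] by (auto simp: degree_monom_eq)
    qed
  qed (use j0le in auto)
  also have "\<dots> = coeff C j0 * [:fact j0:]" by (simp add: higher_pderiv_monom_self)
  finally have "coeff C j0 * [:fact j0:] = 0" using assms by simp
  then show False using c0 by simp
qed

lemma opw_inj:
  assumes "\<And>f. opw A f = opw B f"
  shows "A = B"
  using opw_zero_imp[of "A - B"] assms by (simp add: opw_diff)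

lemma wm_assoc: "weyl_mult (weyl_mult A B) C = weyl_mult A (weyl_mult B C)"
  by (rule opw_inj) (simp add: opw_mult)

lemma wm_add_left: "weyl_mult (A + B) C = weyl_mult A C + weyl_mult B C"
  by (rule opw_inj) (simp add: opw_mult opw_add)

lemma smult_sum2: "smult c (sum f S) = (\<Sum>i\<in>S. smult c (f i))"
  by (induction S rule: infinite_finite_induct) (simp_all add: smult_add_right)

lemma opw_arg_smult: "opw A (smult c f) = smult c (opw A f)"
  unfolding opw_def by (simp add: higher_pderiv_smult smult_sum2)

lemma wm_add_right: "weyl_mult A (B + C) = weyl_mult A B + weyl_mult A C"
  by (rule opw_inj) (simp add: opw_mult opw_add opw_arg_add)

lemma opw_one [simp]: "opw 1 f = f"
  using opw_monom[of 1 0 f] by (simp add: monom_0 one_pCons)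

lemma wm_one_left [simp]: "weyl_mult 1 A = A"
  by (rule opw_inj) (simp add: opw_mult)

lemma wm_one_right [simp]: "weyl_mult A 1 = A"
  by (rule opw_inj) (simp add: opw_mult)

lemma wm_zero_left [simp]: "weyl_mult 0 A = 0"
  by (rule opw_inj) (simp add: opw_mult)

lemma wm_zero_right [simp]: "weyl_mult A 0 = 0"
  by (rule opw_inj) (simp add: opw_mult)

lemma wm_smult_left: "weyl_mult (smult c A) B = smult c (weyl_mult A B)"
  by (rule opw_inj) (simp add: opw_mult opw_smult)

lemma wm_smult_right_const: "weyl_mult A (smult [:c:] B) = smult [:c:] (weyl_mult A B)"
  by (rule opw_inj) (simp add: opw_mult opw_smult opw_arg_smult)

typedef (overloaded) 'a weyl = "UNIV :: 'a::field_char_0 poly poly set" by simp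

instantiation weyl :: (field_char_0) ring_1
begin
definition "0 = Abs_weyl 0"
definition "1 = Abs_weyl 1"
definition "a + b = Abs_weyl (Rep_weyl a + Rep_weyl b)"
definition "a - b = Abs_weyl (Rep_weyl a - Rep_weyl b)"
definition "- a = Abs_weyl (- Rep_weyl a)"
definition "a * b = Abs_weyl (weyl_mult (Rep_weyl a) (Rep_weyl b))"
instance
  by standard
    (simp_all add: zero_weyl_def one_weyl_def plus_weyl_def minus_weyl_def uminus_weyl_def times_weyl_def
      Abs_weyl_inverse Rep_weyl_inverse Abs_weyl_inject wm_assoc wm_add_left wm_add_right algebra_simps)
end




abbreviation mpd :: "'a::field_char_0 poly poly \<Rightarrow> 'a poly poly" where
  "mpd A \<equiv> map_poly pderiv A"

lemma coeff_mpd [simp]: "coeff (mpd A) j = pderiv (coeff A j)"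
  by (simp add: coeff_map_poly)

lemma degree_mpd_le: "degree (mpd A) \<le> degree A"
  by (rule degree_le) (simp add: coeff_eq_0)

lemma higher_pderiv_x_mult:
  fixes f :: "'a::field_char_0 poly"
  shows "(pderiv ^^ j) ([:0,1:] * f) = [:0,1:] * (pderiv ^^ j) f + of_nat j * (pderiv ^^ (j - 1)) f"
proof (induction j)
  case 0 then show ?case by simp
next
  case (Suc j)
  show ?case
  proof (cases j)
    case 0 then show ?thesis by (simp add: pderiv_mult pderiv_pCons)
  next
    case (Suc i)
    have "(pderiv ^^ Suc j) ([:0,1:] * f) = pderiv ((pderiv ^^ j) ([:0,1:] * f))" by simp
    also have "\<dots> = [:0,1:] * (pderiv ^^ Suc j) f + (pderiv ^^ j) f + of_nat j * (pderiv ^^ j) f"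
      using Suc.IH Suc by (simp add: pderiv_add pderiv_mult pderiv_pCons algebra_simps)
    finally show ?thesis by (simp add: algebra_simps)
  qed
qed

lemma opw_shift:
  "(\<Sum>j\<le>Suc N. g j) = g 0 + (\<Sum>j\<le>N. g (Suc j))"
  by (subst sum.atMost_Suc_shift) simp

lemma wm_X_left: "weyl_mult weyl_X A = smult [:0,1:] A"
  by (rule opw_inj) (simp add: opw_mult opw_smult weyl_X_def)

lemma opw_pderiv: "opw (pderiv A) f = (\<Sum>j\<le>degree A. coeff A j * (of_nat j * (pderiv ^^ (j - 1)) f))"
proof -
  have "opw (pderiv A) f = (\<Sum>j\<le>degree A. coeff (pderiv A) j * (pderiv ^^ j) f)"
    by (rule opw_le) (simp add: degree_pderiv)
  also have "\<dots> = (\<Sum>j\<le>degree A. coeff A (Suc j) * (of_nat (Suc j) * (pderiv ^^ j) f))"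
    by (simp add: coeff_pderiv mult_ac)
  also have "\<dots> = (\<Sum>j\<le>Suc (degree A). coeff A j * (of_nat j * (pderiv ^^ (j - 1)) f))"
    by (simp only: opw_shift) simp
  also have "\<dots> = (\<Sum>j\<le>degree A. coeff A j * (of_nat j * (pderiv ^^ (j - 1)) f))"
    by (simp add: coeff_eq_0)
  finally show ?thesis .
qed

lemma wm_X_right: "weyl_mult A weyl_X = smult [:0,1:] A + pderiv A"
proof (rule opw_inj)
  fix f
  have "opw (weyl_mult A weyl_X) f = opw A ([:0,1:] * f)"
    by (simp add: opw_mult weyl_X_def)
  also have "\<dots> = (\<Sum>j\<le>degree A. coeff A j * ([:0,1:] * (pderiv ^^ j) f + of_nat j * (pderiv ^^ (j - 1)) f))"
    unfolding opw_def higher_pderiv_x_mult ..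
  also have "\<dots> = [:0,1:] * opw A f + opw (pderiv A) f"
    unfolding opw_pderiv by (simp add: opw_def algebra_simps sum.distrib sum_distrib_left)
  also have "\<dots> = opw (smult [:0,1:] A + pderiv A) f"
    by (simp add: opw_add opw_smult)
  finally show "opw (weyl_mult A weyl_X) f = opw (smult [:0,1:] A + pderiv A) f" .
qed

lemma opw_pCons0: "opw (pCons 0 A) f = opw A (pderiv f)"
proof -
  have "opw (pCons 0 A) f = (\<Sum>j\<le>Suc (degree A). coeff (pCons 0 A) j * (pderiv ^^ j) f)"
    by (rule opw_le) (simp add: degree_pCons_le)
  also have "\<dots> = (\<Sum>j\<le>degree A. coeff A j * (pderiv ^^ j) (pderiv f))"
    by (simp only: opw_shift) (simp add: funpow_Suc_right del: funpow.simps)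
  finally show ?thesis by (simp add: opw_def)
qed

lemma wm_Y_right: "weyl_mult A weyl_Y = pCons 0 A"
  by (rule opw_inj) (simp add: opw_mult opw_pCons0 weyl_Y_def)

lemma wm_Y_left: "weyl_mult weyl_Y A = pCons 0 A + mpd A"
proof (rule opw_inj)
  fix f
  have "opw (weyl_mult weyl_Y A) f = pderiv (opw A f)"
    by (simp add: opw_mult weyl_Y_def)
  also have "\<dots> = (\<Sum>j\<le>degree A. coeff A j * (pderiv ^^ j) (pderiv f)) + (\<Sum>j\<le>degree A. pderiv (coeff A j) * (pderiv ^^ j) f)"
    unfolding opw_def pderiv_sum' by (simp add: pderiv_mult sum.distrib funpow_Suc_right funpow_swap1 del: funpow.simps add: mult_ac)
  also have "(\<Sum>j\<le>degree A. pderiv (coeff A j) * (pderiv ^^ j) f) = opw (mpd A) f"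
    by (subst opw_le[OF degree_mpd_le]) simp
  also have "(\<Sum>j\<le>degree A. coeff A j * (pderiv ^^ j) (pderiv f)) = opw (pCons 0 A) f"
    by (simp only: opw_pCons0 opw_def[of A])
  finally show "opw (weyl_mult weyl_Y A) f = opw (pCons 0 A + mpd A) f"
    by (simp only: opw_add)
qed

definition cm :: "'a::field_char_0 poly poly \<Rightarrow> 'a poly poly \<Rightarrow> 'a poly poly" where
  "cm A B = weyl_mult A B - weyl_mult B A"

lemma cm_X: "cm A weyl_X = pderiv A"
  by (simp add: cm_def wm_X_right wm_X_left)

lemma cm_Y: "cm weyl_Y A = mpd A"
  by (simp add: cm_def wm_Y_right wm_Y_left)




lemma Rep_weyl_Abs [simp]: "Rep_weyl (Abs_weyl x) = x"
  by (simp add: Abs_weyl_inverse)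

lemma Rep_weyl_ops [simp]:
  "Rep_weyl (a + b) = Rep_weyl a + Rep_weyl b"
  "Rep_weyl (a - b) = Rep_weyl a - Rep_weyl b"
  "Rep_weyl (- a) = - Rep_weyl a"
  "Rep_weyl (a * b) = weyl_mult (Rep_weyl a) (Rep_weyl b)"
  "Rep_weyl 0 = 0"
  "Rep_weyl 1 = 1"
  by (simp_all add: zero_weyl_def one_weyl_def plus_weyl_def minus_weyl_def uminus_weyl_def times_weyl_def)

lemma weyl_eqI: "Rep_weyl a = Rep_weyl b \<Longrightarrow> a = b"
  by (simp add: Rep_weyl_inject)

definition sc :: "'a::field_char_0 \<Rightarrow> 'a weyl" where
  "sc c = Abs_weyl [:[:c:]:]"

lemma const_eq_smult1: "[:[:c:]:] = smult [:c:] (1::'a::field_char_0 poly poly)"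
  by simp

lemma Rep_sc_mult [simp]: "Rep_weyl (sc c * a) = smult [:c:] (Rep_weyl a)"
  unfolding sc_def by (simp only: Rep_weyl_ops Rep_weyl_Abs const_eq_smult1 wm_smult_left wm_one_left)

lemma Rep_mult_sc [simp]: "Rep_weyl (a * sc c) = smult [:c:] (Rep_weyl a)"
  unfolding sc_def by (simp only: Rep_weyl_ops Rep_weyl_Abs const_eq_smult1 wm_smult_right_const wm_one_right)

lemma sc_central: "sc c * a = a * sc c"
  by (rule weyl_eqI) (simp only: Rep_sc_mult Rep_mult_sc)

lemma sc_comm_left: "a * (sc c * b) = sc c * (a * b)"
  by (metis mult.assoc sc_central)

lemma sc_comm_right: "a * sc c = sc c * a"
  by (rule sc_central[symmetric])

lemma Rep_sc [simp]: "Rep_weyl (sc c) = [:[:c:]:]"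
  by (simp add: sc_def)

lemma wm_const_left [simp]: "weyl_mult [:[:c:]:] A = smult [:c:] A"
  using Rep_sc_mult[of c "Abs_weyl A"] by (simp del: Rep_sc_mult)

lemma wm_const_right [simp]: "weyl_mult A [:[:c:]:] = smult [:c:] A"
  using Rep_mult_sc[of "Abs_weyl A" c] by (simp del: Rep_mult_sc)

declare wm_X_left [simp] wm_X_right [simp] wm_Y_left [simp] wm_Y_right [simp]

lemma sc_0 [simp]: "sc 0 = 0" by (rule weyl_eqI) simp
lemma sc_1 [simp]: "sc 1 = 1" by (rule weyl_eqI) (simp add: one_pCons)
lemma sc_add: "sc (c + d) = sc c + sc d" by (rule weyl_eqI) simp
lemma sc_mult: "sc (c * d) = sc c * sc d" by (rule weyl_eqI) (simp only: Rep_sc_mult Rep_sc, simp)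
lemma sc_eq_0_iff [simp]: "sc c = 0 \<longleftrightarrow> c = 0"
  by (metis Rep_sc Rep_weyl_ops(5) pCons_eq_0_iff sc_0)

definition Xw :: "'a::field_char_0 weyl" where "Xw = Abs_weyl weyl_X"
definition Yw :: "'a::field_char_0 weyl" where "Yw = Abs_weyl weyl_Y"

lemma Rep_Xw [simp]: "Rep_weyl Xw = weyl_X" by (simp add: Xw_def)
lemma Rep_Yw [simp]: "Rep_weyl Yw = weyl_Y" by (simp add: Yw_def)

lemma Rep_Xw_mult: "Rep_weyl (Xw * a) = smult [:0,1:] (Rep_weyl a)"
  by (simp add: Xw_def wm_X_left)
lemma Rep_mult_Xw: "Rep_weyl (a * Xw) = smult [:0,1:] (Rep_weyl a) + pderiv (Rep_weyl a)"
  by (simp add: Xw_def wm_X_right)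
lemma Rep_Yw_mult: "Rep_weyl (Yw * a) = pCons 0 (Rep_weyl a) + mpd (Rep_weyl a)"
  by (simp add: Yw_def wm_Y_left)
lemma Rep_mult_Yw: "Rep_weyl (a * Yw) = pCons 0 (Rep_weyl a)"
  by (simp add: Yw_def wm_Y_right)

section \<open>Substitution homomorphism\<close>

definition ev :: "'a::field_char_0 weyl \<Rightarrow> 'a poly \<Rightarrow> 'a weyl" where
  "ev Q p = foldr (\<lambda>a r. sc a + Q * r) (coeffs p) 0"

definition sg :: "'a::field_char_0 weyl \<Rightarrow> 'a weyl \<Rightarrow> 'a poly poly \<Rightarrow> 'a weyl" where
  "sg P Q A = foldr (\<lambda>a r. ev Q a + r * P) (coeffs A) 0"

lemma ev_0 [simp]: "ev Q 0 = 0" by (simp add: ev_def)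

lemma ev_pCons: "ev Q (pCons a p) = sc a + Q * ev Q p"
  by (cases "a = 0 \<and> p = 0") (auto simp: ev_def cCons_def)

lemma ev_add: "ev Q (p + q) = ev Q p + ev Q q"
  by (induction p q rule: poly_induct2) (simp_all add: ev_pCons sc_add algebra_simps)

lemma ev_smult: "ev Q (smult c p) = sc c * ev Q p"
  by (induction p) (simp_all add: ev_pCons sc_mult distrib_left sc_comm_left mult.assoc)

lemma ev_const [simp]: "ev Q [:c:] = sc c"
  by (simp add: ev_pCons)

lemma ev_pderiv:
  assumes "P * Q - Q * P = 1"
  shows "P * ev Q p - ev Q p * P = ev Q (pderiv p)"
proof (induction p)
  case 0 then show ?case by simp
next
  case (pCons a p)
  have PQ: "P * Q = Q * P + 1" using assms by (simp add: algebra_simps)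
  have "P * ev Q (pCons a p) - ev Q (pCons a p) * P = P * Q * ev Q p - Q * ev Q p * P"
    by (simp add: ev_pCons distrib_left distrib_right sc_comm_right mult.assoc)
  also have "\<dots> = Q * (P * ev Q p - ev Q p * P) + ev Q p"
    by (simp add: PQ algebra_simps mult.assoc)
  also have "\<dots> = ev Q (pderiv (pCons a p))"
    by (simp add: pCons.IH pderiv_pCons ev_add ev_pCons add.commute)
  finally show ?case .
qed

lemma sg_0 [simp]: "sg P Q 0 = 0" by (simp add: sg_def)

lemma sg_pCons: "sg P Q (pCons a A) = ev Q a + sg P Q A * P"
  by (cases "a = 0 \<and> A = 0") (auto simp: sg_def cCons_def)

lemma sg_add: "sg P Q (A + B) = sg P Q A + sg P Q B"
  by (induction A B rule: poly_induct2) (simp_all add: sg_pCons ev_add algebra_simps)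

lemma sg_smult_const: "sg P Q (smult [:c:] A) = sc c * sg P Q A"
  by (induction A) (simp_all add: sg_pCons ev_smult algebra_simps mult.assoc)

lemma sg_Xmul: "sg P Q (smult [:0,1:] A) = Q * sg P Q A"
  by (induction A) (simp_all add: sg_pCons ev_pCons algebra_simps mult.assoc)

lemma sg_const [simp]: "sg P Q [:a:] = ev Q a"
  by (simp add: sg_pCons)

lemma sg_Ymul:
  assumes "P * Q - Q * P = 1"
  shows "sg P Q (pCons 0 A + mpd A) = P * sg P Q A"
proof (induction A)
  case 0 then show ?case by simp
next
  case (pCons a A)
  have e1: "pCons 0 (pCons a A) + mpd (pCons a A) = pCons (pderiv a) ([:a:] + (pCons 0 A + mpd A))"
    by (simp add: map_poly_pCons)
  have e2: "P * ev Q a = ev Q a * P + ev Q (pderiv a)"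
    using ev_pderiv[OF assms, of a] by (simp add: algebra_simps)
  have ih: "P * sg P Q A = sg P Q A * P + sg P Q (mpd A)"
    using pCons.IH by (simp add: sg_add sg_pCons)
  have "sg P Q (pCons 0 (pCons a A) + mpd (pCons a A)) = ev Q (pderiv a) + (ev Q a + (sg P Q A * P + sg P Q (mpd A))) * P"
    unfolding e1 by (simp add: sg_pCons sg_add)
  also have "\<dots> = P * sg P Q (pCons a A)"
    unfolding sg_pCons distrib_left e2 mult.assoc[symmetric] ih by (simp add: algebra_simps)
  finally show ?case .
qed

lemma Abs_const_pCons: "Abs_weyl [:pCons c a:] = sc c + Xw * Abs_weyl [:a:]"
  by (rule weyl_eqI) simp

lemma Abs_pCons: "Abs_weyl (pCons a A) = Abs_weyl [:a:] + Abs_weyl A * Yw"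
  by (rule weyl_eqI) simp

definition sgw :: "'a::field_char_0 weyl \<Rightarrow> 'a weyl \<Rightarrow> 'a weyl \<Rightarrow> 'a weyl" where
  "sgw P Q A = sg P Q (Rep_weyl A)"

context
  fixes P Q :: "'a::field_char_0 weyl"
  assumes PQ: "P * Q - Q * P = 1"
begin

lemma sgw_add: "sgw P Q (A + B) = sgw P Q A + sgw P Q B"
  by (simp add: sgw_def sg_add)

lemma sgw_0 [simp]: "sgw P Q 0 = 0"
  by (simp add: sgw_def)

lemma sgw_diff: "sgw P Q (A - B) = sgw P Q A - sgw P Q B"
  using sgw_add[of "A - B" B] by (simp add: algebra_simps)

lemma sgw_sc_mult: "sgw P Q (sc c * A) = sc c * sgw P Q A"
  by (simp add: sgw_def sg_smult_const)

lemma sgw_X_mult: "sgw P Q (Xw * A) = Q * sgw P Q A"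
  by (simp add: sgw_def sg_Xmul)

lemma sgw_Y_mult: "sgw P Q (Yw * A) = P * sgw P Q A"
  by (simp add: sgw_def sg_Ymul[OF PQ])

lemma sgw_1 [simp]: "sgw P Q 1 = 1"
  by (simp add: sgw_def one_pCons)

lemma sgw_sc [simp]: "sgw P Q (sc c) = sc c"
  using sgw_sc_mult[of c 1] by simp

lemma sgw_Xw [simp]: "sgw P Q Xw = Q"
  using sgw_X_mult[of 1] by simp

lemma sgw_Yw [simp]: "sgw P Q Yw = P"
  using sgw_Y_mult[of 1] by simp

lemma sgw_mult_const: "sgw P Q (Abs_weyl [:a:] * B) = sgw P Q (Abs_weyl [:a:]) * sgw P Q B"
proof (induction a arbitrary: B)
  case 0 then show ?case by (simp flip: zero_weyl_def)
next
  case (pCons c a)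
  have "sgw P Q (Abs_weyl [:pCons c a:]) = sc c + Q * sgw P Q (Abs_weyl [:a:])"
    using pCons.IH[of 1] unfolding Abs_const_pCons by (simp add: sgw_add sgw_X_mult)
  then show ?case
    unfolding Abs_const_pCons
    by (simp add: distrib_right sgw_add sgw_sc_mult sgw_X_mult mult.assoc pCons.IH algebra_simps)
qed

lemma sgw_mult_Abs: "sgw P Q (Abs_weyl C * B) = sgw P Q (Abs_weyl C) * sgw P Q B"
proof (induction C arbitrary: B)
  case 0 then show ?case by (simp flip: zero_weyl_def)
next
  case (pCons a C)
  have Y: "sgw P Q (Abs_weyl C * Yw) = sgw P Q (Abs_weyl C) * P"
    using pCons.IH[of Yw] by simp
  have YB: "sgw P Q (Abs_weyl C * (Yw * B)) = sgw P Q (Abs_weyl C) * (P * sgw P Q B)"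
    using pCons.IH[of "Yw * B"] by (simp only: sgw_Y_mult)
  have "sgw P Q (Abs_weyl (pCons a C) * B) = sgw P Q (Abs_weyl [:a:] * B) + sgw P Q (Abs_weyl C * (Yw * B))"
    unfolding Abs_pCons[of a C] distrib_right sgw_add mult.assoc ..
  also have "\<dots> = sgw P Q (Abs_weyl [:a:]) * sgw P Q B + sgw P Q (Abs_weyl C) * (P * sgw P Q B)"
    by (simp only: sgw_mult_const YB)
  also have "\<dots> = sgw P Q (Abs_weyl (pCons a C)) * sgw P Q B"
    unfolding Abs_pCons[of a C] sgw_add Y by (simp only: distrib_right mult.assoc)
  finally show ?case .
qed

lemma sgw_mult: "sgw P Q (A * B) = sgw P Q A * sgw P Q B"
  using sgw_mult_Abs[of "Rep_weyl A" B] by (simp only: Rep_weyl_inverse)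

lemma higher_mpd_const: "(mpd ^^ m) [:c:] = [:(pderiv ^^ m) c:]"
  by (induction m) (simp_all add: map_poly_pCons)

lemma sgw_kernel_pderiv:
  assumes "sgw P Q A = 0"
  shows "sgw P Q (Abs_weyl ((pderiv ^^ k) (Rep_weyl A))) = 0"
proof (induction k)
  case 0 then show ?case using assms by (simp add: Rep_weyl_inverse)
next
  case (Suc k)
  let ?B = "Abs_weyl ((pderiv ^^ k) (Rep_weyl A))"
  have "Abs_weyl ((pderiv ^^ Suc k) (Rep_weyl A)) = ?B * Xw - Xw * ?B"
    by (rule weyl_eqI) simp
  then show ?case by (simp add: sgw_diff sgw_mult Suc.IH)
qed

lemma sgw_kernel_mpd:
  assumes "sgw P Q A = 0"
  shows "sgw P Q (Abs_weyl ((mpd ^^ k) (Rep_weyl A))) = 0"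
proof (induction k)
  case 0 then show ?case using assms by (simp add: Rep_weyl_inverse)
next
  case (Suc k)
  let ?B = "Abs_weyl ((mpd ^^ k) (Rep_weyl A))"
  have "Abs_weyl ((mpd ^^ Suc k) (Rep_weyl A)) = Yw * ?B - ?B * Yw"
    by (rule weyl_eqI) simp
  then show ?case by (simp add: sgw_diff sgw_mult Suc.IH)
qed

lemma higher_pderiv_top:
  fixes p :: "'b::{field_char_0} poly"
  shows "(pderiv ^^ degree p) p = [:fact (degree p) * lead_coeff p:]"
proof (rule poly_eqI)
  fix n
  show "coeff ((pderiv ^^ degree p) p) n = coeff [:fact (degree p) * lead_coeff p:] n"
    by (cases n) (simp_all add: coeff_higher_pderiv pochhammer_fact coeff_eq_0)
qed

lemma higher_pderiv_top2:
  fixes p :: "'a poly poly"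
  shows "(pderiv ^^ degree p) p = [:of_nat (fact (degree p)) * lead_coeff p:]"
proof (rule poly_eqI)
  fix n
  show "coeff ((pderiv ^^ degree p) p) n = coeff [:of_nat (fact (degree p)) * lead_coeff p:] n"
    by (cases n) (simp_all add: coeff_higher_pderiv pochhammer_fact coeff_eq_0 flip: pochhammer_of_nat)
qed

lemma sgw_inj0:
  assumes "sgw P Q A = 0"
  shows "A = 0"
proof (rule ccontr)
  assume "A \<noteq> 0"
  then have A0: "Rep_weyl A \<noteq> 0" by (metis Rep_weyl_ops(5) weyl_eqI)
  define c where "c = of_nat (fact (degree (Rep_weyl A))) * lead_coeff (Rep_weyl A)"
  have c0: "c \<noteq> 0" using A0 by (simp add: c_def)
  have "sgw P Q (Abs_weyl [:c:]) = 0"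
    using sgw_kernel_pderiv[OF assms, of "degree (Rep_weyl A)"] by (simp add: higher_pderiv_top2 c_def)
  from sgw_kernel_mpd[OF this, of "degree c"]
  have "sgw P Q (sc (fact (degree c) * lead_coeff c)) = 0"
    by (simp add: higher_mpd_const higher_pderiv_top sc_def)
  then show False using c0 by simp
qed

lemma sgw_inj: "inj (sgw P Q)"
proof (rule injI)
  fix A B assume "sgw P Q A = sgw P Q B"
  then have "sgw P Q (A - B) = 0" by (simp add: sgw_diff)
  then have "A - B = 0" by (rule sgw_inj0)
  then show "A = B" by simp
qed

end


definition subalg :: "'a::field_char_0 weyl set \<Rightarrow> bool" where
  "subalg S \<longleftrightarrow> (\<forall>a\<in>S. \<forall>b\<in>S. a + b \<in> S \<and> a * b \<in> S) \<and> (\<forall>c. sc c \<in> S)"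

lemma range_subalg:
  assumes "P * Q - Q * P = 1"
  shows "subalg (range (sgw P Q))"
  unfolding subalg_def
proof (intro conjI ballI allI)
  fix a b assume "a \<in> range (sgw P Q)" "b \<in> range (sgw P Q)"
  then obtain A B where "a = sgw P Q A" "b = sgw P Q B" by auto
  then show "a + b \<in> range (sgw P Q)" "a * b \<in> range (sgw P Q)"
    using sgw_add[OF assms, of A B] sgw_mult[OF assms, of A B] by (metis rangeI)+
next
  fix c show "sc c \<in> range (sgw P Q)" using sgw_sc[OF assms, of c] by (metis rangeI)
qed

lemma subalg_diff:
  assumes "subalg S" "a \<in> S" "b \<in> S"
  shows "a - b \<in> S"
proof -
  have "sc (-1) * b \<in> S" using assms unfolding subalg_def by blast
  then have "a + sc (-1) * b \<in> S" using assms unfolding subalg_def by blast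
  moreover have "sc (-1) * b = - b"
  proof (rule weyl_eqI)
    have "[:-1:] = (-1 :: 'a poly)" by (metis minus_pCons one_pCons minus_zero)
    then show "Rep_weyl (sc (-1) * b) = Rep_weyl (- b)" by (simp only: Rep_sc_mult) simp
  qed
  ultimately show ?thesis by simp
qed

lemma subalg_scmult:
  assumes "subalg S" "b \<in> S"
  shows "sc c * b \<in> S"
  using assms unfolding subalg_def by blast

lemma subalg_KX:
  assumes "subalg S" "Xw \<in> S"
  shows "Abs_weyl [:a:] \<in> S"
proof (induction a)
  case 0
  have "sc 0 \<in> S" using assms unfolding subalg_def by blast
  then show ?case by (simp add: sc_def)
next
  case (pCons c a)
  have "sc c \<in> S" using assms unfolding subalg_def by blast
  moreover have "Xw * Abs_weyl [:a:] \<in> S" using assms pCons.IH unfolding subalg_def by blast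
  ultimately show ?case
    unfolding Abs_const_pCons using assms unfolding subalg_def by blast
qed

lemma subalg_all:
  assumes "subalg S" "Xw \<in> S" "Yw \<in> S"
  shows "A \<in> S"
proof -
  have "Abs_weyl C \<in> S" for C
  proof (induction C)
    case 0
    have "sc 0 \<in> S" using assms unfolding subalg_def by blast
    then show ?case by (simp add: sc_def)
  next
    case (pCons a C)
    have "Abs_weyl C * Yw \<in> S" using assms pCons.IH unfolding subalg_def by blast
    then show ?case unfolding Abs_pCons[of a C]
      using subalg_KX[OF assms(1,2), of a] assms unfolding subalg_def by blast
  qed
  from this[of "Rep_weyl A"] show ?thesis by (simp add: Rep_weyl_inverse)
qed

lemma subalg_KY:
  assumes "subalg S" "Yw \<in> S" "\<forall>j. degree (coeff G j) = 0"
  shows "Abs_weyl G \<in> S"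
  using assms(3)
proof (induction G)
  case 0
  have "sc 0 \<in> S" using assms unfolding subalg_def by blast
  then show ?case by (simp add: sc_def)
next
  case (pCons a C)
  have dC: "\<forall>j. degree (coeff C j) = 0" using pCons.prems by (metis coeff_pCons_Suc)
  have "degree a = 0" using pCons.prems by (metis coeff_pCons_0)
  then have "a = [:coeff a 0:]" by (metis degree_0_id)
  then have "Abs_weyl [:a:] = sc (coeff a 0)" unfolding sc_def by metis
  then have "Abs_weyl [:a:] \<in> S" using assms unfolding subalg_def by auto
  moreover have "Abs_weyl C * Yw \<in> S" using assms pCons.IH[OF dC] unfolding subalg_def by blast
  ultimately show ?case unfolding Abs_pCons[of a C] using assms unfolding subalg_def by blast
qed

lemma Abs_add: "Abs_weyl (A + B) = Abs_weyl A + Abs_weyl B"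
  by (rule weyl_eqI) simp

lemma Abs_cX: "Abs_weyl [:[:0, c:]:] = sc c * Xw"
  by (rule weyl_eqI) (simp add: weyl_X_def monom_0)

lemma Abs_cY: "Abs_weyl (monom [:c:] 1) = sc c * Yw"
  by (rule weyl_eqI) (simp add: weyl_Y_def monom_Suc monom_0)

lemma Abs_const: "Abs_weyl [:[:c:]:] = sc c"
  by (simp add: sc_def)

lemma aut_exists:
  fixes P Q :: "'a::field_char_0 poly poly"
  assumes PQ: "cm P Q = 1"
    and X: "Xw \<in> range (sgw (Abs_weyl P) (Abs_weyl Q))"
    and Y: "Yw \<in> range (sgw (Abs_weyl P) (Abs_weyl Q))"
  shows "\<exists>\<tau>. weyl_aut \<tau> \<and> P = \<tau> weyl_Y \<and> Q = \<tau> weyl_X"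
proof -
  let ?P = "Abs_weyl P" and ?Q = "Abs_weyl Q"
  have PQw: "?P * ?Q - ?Q * ?P = 1"
    by (rule weyl_eqI) (use PQ in \<open>simp add: cm_def\<close>)
  let ?s = "sgw ?P ?Q"
  define \<tau> where "\<tau> A = Rep_weyl (?s (Abs_weyl A))" for A
  have surj: "B \<in> range ?s" for B
    using subalg_all[OF range_subalg[OF PQw] X Y] .
  have "bij \<tau>"
  proof (rule bijI)
    show "inj \<tau>"
    proof (rule injI)
      fix A B assume "\<tau> A = \<tau> B"
      then have "?s (Abs_weyl A) = ?s (Abs_weyl B)" unfolding \<tau>_def using Rep_weyl_inject by blast
      then have "Abs_weyl A = Abs_weyl B" using sgw_inj[OF PQw] by (meson injD)
      then show "A = B" by (metis Rep_weyl_Abs)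
    qed
    show "surj \<tau>"
      unfolding surj_def
    proof
      fix B
      obtain A where "Abs_weyl B = ?s A" using surj[of "Abs_weyl B"] by auto
      then have "B = \<tau> (Rep_weyl A)" unfolding \<tau>_def by (metis Rep_weyl_Abs Rep_weyl_inverse)
      then show "\<exists>A. B = \<tau> A" by blast
    qed
  qed
  moreover have "\<tau> (A + B) = \<tau> A + \<tau> B" for A B
    unfolding \<tau>_def Abs_add sgw_add[OF PQw] by simp
  moreover have "\<tau> (smult [:c:] A) = smult [:c:] (\<tau> A)" for c A
  proof -
    have "Abs_weyl (smult [:c:] A) = sc c * Abs_weyl A" by (rule weyl_eqI) simp
    then show ?thesis unfolding \<tau>_def by (simp add: sgw_sc_mult[OF PQw])
  qed
  moreover have "\<tau> (weyl_mult A B) = weyl_mult (\<tau> A) (\<tau> B)" for A B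
  proof -
    have "Abs_weyl (weyl_mult A B) = Abs_weyl A * Abs_weyl B" by (rule weyl_eqI) simp
    then show ?thesis unfolding \<tau>_def by (simp add: sgw_mult[OF PQw])
  qed
  moreover have "\<tau> 1 = 1"
  proof -
    have "Abs_weyl 1 = (1 :: 'a weyl)" by (rule weyl_eqI) simp
    then show ?thesis unfolding \<tau>_def by (simp add: sgw_1[OF PQw])
  qed
  ultimately have "weyl_aut \<tau>" unfolding weyl_aut_def by blast
  moreover have "\<tau> weyl_Y = P" unfolding \<tau>_def using sgw_Yw[OF PQw] by (simp add: Yw_def[symmetric])
  moreover have "\<tau> weyl_X = Q" unfolding \<tau>_def using sgw_Xw[OF PQw] by (simp add: Xw_def[symmetric])
  ultimately show ?thesis by metis
qed


lemma sc_inv_cancel: "(c::'a::field_char_0) \<noteq> 0 \<Longrightarrow> sc c * (sc (inverse c) * x) = x"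
  by (simp add: mult.assoc[symmetric] sc_mult[symmetric])

lemma sc_inv_cancel': "(c::'a::field_char_0) \<noteq> 0 \<Longrightarrow> sc (inverse c) * (sc c * x) = x"
  by (simp add: mult.assoc[symmetric] sc_mult[symmetric])

lemma const_poly_eq: "degree f = 0 \<Longrightarrow> Abs_weyl [:f:] = sc (coeff f 0)"
  by (metis degree_0_id sc_def)

lemma KY_const_eq:
  assumes "\<forall>j. degree (coeff G j) = 0" "degree G = 0"
  shows "Abs_weyl G = sc (coeff (coeff G 0) 0)"
proof -
  have "G = [:coeff G 0:]" using assms(2) by (metis degree_0_id)
  moreover have "coeff G 0 = [:coeff (coeff G 0) 0:]" using assms(1) by (metis degree_0_id)
  ultimately show ?thesis unfolding sc_def by metis
qed

lemma formY:
  fixes P Q G :: "'a::field_char_0 poly poly" and f :: "'a poly"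
  assumes PQ: "cm P Q = 1" and c: "c \<noteq> 0"
    and P: "P = monom [:c:] 1 + [:f:]" and Q: "Q = [:[:0, inverse c:]:] + G"
    and G: "\<forall>j. degree (coeff G j) = 0" and fg: "degree f = 0 \<or> degree G = 0"
  shows "\<exists>\<tau>. weyl_aut \<tau> \<and> P = \<tau> weyl_Y \<and> Q = \<tau> weyl_X"
proof -
  let ?P = "Abs_weyl P" and ?Q = "Abs_weyl Q"
  have PQw: "?P * ?Q - ?Q * ?P = 1"
    by (rule weyl_eqI) (use PQ in \<open>simp add: cm_def\<close>)
  let ?S = "range (sgw ?P ?Q)"
  have S: "subalg ?S" by (rule range_subalg[OF PQw])
  have PS: "?P \<in> ?S" using sgw_Yw[OF PQw] by (metis rangeI)
  have QS: "?Q \<in> ?S" using sgw_Xw[OF PQw] by (metis rangeI)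
  have Pw: "?P = sc c * Yw + Abs_weyl [:f:]" unfolding P Abs_add Abs_cY ..
  have Qw: "?Q = sc (inverse c) * Xw + Abs_weyl G" unfolding Q Abs_add Abs_cX ..
  have "Xw \<in> ?S \<and> Yw \<in> ?S"
    using fg
  proof
    assume "degree G = 0"
    then have Gc: "Abs_weyl G = sc (coeff (coeff G 0) 0)" using KY_const_eq G by blast
    have "Xw = sc c * (?Q - sc (coeff (coeff G 0) 0))" unfolding Qw Gc using c by (simp add: sc_inv_cancel)
    moreover have "sc (coeff (coeff G 0) 0) \<in> ?S" using S unfolding subalg_def by blast
    ultimately have XS: "Xw \<in> ?S" using S QS subalg_diff subalg_scmult by metis
    have "Yw = sc (inverse c) * (?P - Abs_weyl [:f:])" unfolding Pw using c by (simp add: sc_inv_cancel')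
    then have "Yw \<in> ?S" using S PS subalg_diff subalg_scmult subalg_KX[OF S XS] by metis
    then show ?thesis using XS by blast
  next
    assume "degree f = 0"
    then have fc: "Abs_weyl [:f:] = sc (coeff f 0)" by (rule const_poly_eq)
    have "Yw = sc (inverse c) * (?P - sc (coeff f 0))" unfolding Pw fc using c by (simp add: sc_inv_cancel')
    moreover have "sc (coeff f 0) \<in> ?S" using S unfolding subalg_def by blast
    ultimately have YS: "Yw \<in> ?S" using S PS subalg_diff subalg_scmult by metis
    have "Xw = sc c * (?Q - Abs_weyl G)" unfolding Qw using c by (simp add: sc_inv_cancel)
    then have "Xw \<in> ?S" using S QS subalg_diff subalg_scmult subalg_KY[OF S YS G] by metis
    then show ?thesis using YS by blast
  qed
  then show ?thesis using aut_exists[OF PQ] by blast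
qed

lemma formX:
  fixes P Q G :: "'a::field_char_0 poly poly" and f :: "'a poly"
  assumes PQ: "cm P Q = 1" and c: "c \<noteq> 0" and d: "d \<noteq> 0"
    and P: "P = [:[:0, c:]:] + G" and Q: "Q = monom [:d:] 1 + [:f:]"
    and G: "\<forall>j. degree (coeff G j) = 0" and fg: "degree f = 0 \<or> degree G = 0"
  shows "\<exists>\<tau>. weyl_aut \<tau> \<and> P = \<tau> weyl_Y \<and> Q = \<tau> weyl_X"
proof -
  let ?P = "Abs_weyl P" and ?Q = "Abs_weyl Q"
  have PQw: "?P * ?Q - ?Q * ?P = 1"
    by (rule weyl_eqI) (use PQ in \<open>simp add: cm_def\<close>)
  let ?S = "range (sgw ?P ?Q)"
  have S: "subalg ?S" by (rule range_subalg[OF PQw])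
  have PS: "?P \<in> ?S" using sgw_Yw[OF PQw] by (metis rangeI)
  have QS: "?Q \<in> ?S" using sgw_Xw[OF PQw] by (metis rangeI)
  have Pw: "?P = sc c * Xw + Abs_weyl G" unfolding P Abs_add Abs_cX ..
  have Qw: "?Q = sc d * Yw + Abs_weyl [:f:]" unfolding Q Abs_add Abs_cY ..
  have "Xw \<in> ?S \<and> Yw \<in> ?S"
    using fg
  proof
    assume "degree G = 0"
    then have Gc: "Abs_weyl G = sc (coeff (coeff G 0) 0)" using KY_const_eq G by blast
    have "Xw = sc (inverse c) * (?P - sc (coeff (coeff G 0) 0))" unfolding Pw Gc using c by (simp add: sc_inv_cancel')
    moreover have "sc (coeff (coeff G 0) 0) \<in> ?S" using S unfolding subalg_def by blast
    ultimately have XS: "Xw \<in> ?S" using S PS subalg_diff subalg_scmult by metis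
    have "Yw = sc (inverse d) * (?Q - Abs_weyl [:f:])" unfolding Qw using d by (simp add: sc_inv_cancel')
    then have "Yw \<in> ?S" using S QS subalg_diff subalg_scmult subalg_KX[OF S XS] by metis
    then show ?thesis using XS by blast
  next
    assume "degree f = 0"
    then have fc: "Abs_weyl [:f:] = sc (coeff f 0)" by (rule const_poly_eq)
    have "Yw = sc (inverse d) * (?Q - sc (coeff f 0))" unfolding Qw fc using d by (simp add: sc_inv_cancel')
    moreover have "sc (coeff f 0) \<in> ?S" using S unfolding subalg_def by blast
    ultimately have YS: "Yw \<in> ?S" using S QS subalg_diff subalg_scmult by metis
    have "Xw = sc (inverse c) * (?P - Abs_weyl G)" unfolding Pw using c by (simp add: sc_inv_cancel')
    then have "Xw \<in> ?S" using S PS subalg_diff subalg_scmult subalg_KY[OF S YS G] by metis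
    then show ?thesis using YS by blast
  qed
  then show ?thesis using aut_exists[OF PQ] by blast
qed

lemma formL:
  fixes P Q :: "'a::field_char_0 poly poly"
  assumes PQ: "cm P Q = 1" and dl: "a * b' - a' * b \<noteq> 0"
    and P: "P = [:[:0, a:]:] + monom [:b:] 1" and Q: "Q = [:[:0, a':]:] + monom [:b':] 1"
  shows "\<exists>\<tau>. weyl_aut \<tau> \<and> P = \<tau> weyl_Y \<and> Q = \<tau> weyl_X"
proof -
  let ?P = "Abs_weyl P" and ?Q = "Abs_weyl Q"
  have PQw: "?P * ?Q - ?Q * ?P = 1"
    by (rule weyl_eqI) (use PQ in \<open>simp add: cm_def\<close>)
  let ?S = "range (sgw ?P ?Q)"
  have S: "subalg ?S" by (rule range_subalg[OF PQw])
  have PS: "?P \<in> ?S" using sgw_Yw[OF PQw] by (metis rangeI)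
  have QS: "?Q \<in> ?S" using sgw_Xw[OF PQw] by (metis rangeI)
  let ?d = "a * b' - a' * b"
  have "Xw = sc (inverse ?d) * (sc b' * ?P - sc b * ?Q)"
  proof (rule weyl_eqI)
    have "Rep_weyl (sc (inverse ?d) * (sc b' * ?P - sc b * ?Q)) = smult [:inverse ?d:] (smult [:b':] P - smult [:b:] Q)"
      by (simp only: Rep_sc_mult Rep_weyl_ops(2) Rep_weyl_Abs)
    also have "\<dots> = [:[:0, 1:]:]"
      unfolding P Q using dl by (simp add: monom_Suc monom_0 field_simps)
    finally show "Rep_weyl Xw = Rep_weyl (sc (inverse ?d) * (sc b' * ?P - sc b * ?Q))"
      by (simp add: weyl_X_def monom_0)
  qed
  then have XS: "Xw \<in> ?S" using S PS QS subalg_diff subalg_scmult by metis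
  have "Yw = sc (inverse ?d) * (sc a * ?Q - sc a' * ?P)"
  proof (rule weyl_eqI)
    have "Rep_weyl (sc (inverse ?d) * (sc a * ?Q - sc a' * ?P)) = smult [:inverse ?d:] (smult [:a:] Q - smult [:a':] P)"
      by (simp only: Rep_sc_mult Rep_weyl_ops(2) Rep_weyl_Abs)
    also have "\<dots> = monom 1 1"
      unfolding P Q using dl by (simp add: monom_Suc monom_0 field_simps)
    finally show "Rep_weyl Yw = Rep_weyl (sc (inverse ?d) * (sc a * ?Q - sc a' * ?P))"
      by (simp add: weyl_Y_def)
  qed
  then have "Yw \<in> ?S" using S PS QS subalg_diff subalg_scmult by metis
  then show ?thesis using aut_exists[OF PQ] XS by blast
qed




lemma wm_monom_monom:
  "weyl_mult (monom p b) (monom q d) = (\<Sum>k\<le>b. monom (smult (of_nat (b choose k)) (p * (pderiv ^^ k) q)) (b + d - k))"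
proof (rule opw_inj)
  fix f
  have "opw (weyl_mult (monom p b) (monom q d)) f = p * (\<Sum>k\<le>b. smult (of_nat (b choose k)) ((pderiv ^^ k) q * (pderiv ^^ (b - k)) ((pderiv ^^ d) f)))"
    by (simp add: opw_mult leibniz_pderiv)
  also have "\<dots> = (\<Sum>k\<le>b. smult (of_nat (b choose k)) (p * (pderiv ^^ k) q) * (pderiv ^^ (b + d - k)) f)"
    unfolding sum_distrib_left
  proof (rule sum.cong[OF refl])
    fix k assume "k \<in> {..b}"
    then have "b - k + d = b + d - k" by simp
    then have "(pderiv ^^ (b - k)) ((pderiv ^^ d) f) = (pderiv ^^ (b + d - k)) f"
      by (metis funpow_add comp_apply)
    then show "p * smult (of_nat (b choose k)) ((pderiv ^^ k) q * (pderiv ^^ (b - k)) ((pderiv ^^ d) f)) =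
      smult (of_nat (b choose k)) (p * (pderiv ^^ k) q) * (pderiv ^^ (b + d - k)) f"
      by (simp add: mult_ac)
  qed
  also have "\<dots> = opw (\<Sum>k\<le>b. monom (smult (of_nat (b choose k)) (p * (pderiv ^^ k) q)) (b + d - k)) f"
    by (simp add: opw_sum)
  finally show "opw (weyl_mult (monom p b) (monom q d)) f = opw (\<Sum>k\<le>b. monom (smult (of_nat (b choose k)) (p * (pderiv ^^ k) q)) (b + d - k)) f" .
qed

lemma higher_pderiv_monom':
  "(pderiv ^^ k) (monom (p::'b::{comm_semiring_1,semiring_no_zero_divisors}) b) = monom (of_nat ((b choose k) * fact k) * p) (b - k)"
proof (induction k)
  case 0 then show ?case by simp
next
  case (Suc k)
  have nat: "(b choose Suc k) * fact (Suc k) = (b - k) * ((b choose k) * fact k)"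
  proof -
    have h: "Suc k * (b choose Suc k) = (b - k) * (b choose k)"
      using binomial_absorption[of k b] binomial_absorb_comp[of b k] by simp
    have "(b choose Suc k) * fact (Suc k) = (Suc k * (b choose Suc k)) * fact k"
      unfolding fact_Suc of_nat_id by (simp only: mult_ac)
    also have "\<dots> = (b - k) * ((b choose k) * fact k)" unfolding h by (simp only: mult_ac)
    finally show ?thesis .
  qed
  have "(pderiv ^^ Suc k) (monom p b) = monom (of_nat (b - k) * (of_nat ((b choose k) * fact k) * p)) (b - k - 1)"
    using Suc by (simp add: pderiv_monom)
  also have "\<dots> = monom (of_nat ((b choose Suc k) * fact (Suc k)) * p) (b - Suc k)"
    by (simp only: nat of_nat_mult mult.assoc) simp
  finally show ?case .
qed

lemma mpd_monom: "mpd (monom q d) = monom (pderiv q) d"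
  by (simp add: map_poly_monom)

lemma higher_mpd_monom: "(mpd ^^ k) (monom q d) = monom ((pderiv ^^ k) q) d"
  by (induction k) (simp_all add: mpd_monom)

definition RW :: "nat \<Rightarrow> 'a::field_char_0 poly poly \<Rightarrow> 'a poly poly \<Rightarrow> 'a poly poly" where
  "RW N A B = (\<Sum>k\<le>N. smult [:inverse (fact k):] ((pderiv ^^ k) A * (mpd ^^ k) B))"

lemma RW_monom:
  assumes "b \<le> N"
  shows "RW N (monom p b) (monom q d) = weyl_mult (monom p b) (monom q d)"
proof -
  have "RW N (monom p b) (monom q d) = (\<Sum>k\<le>N. monom (smult (of_nat (b choose k)) (p * (pderiv ^^ k) q)) (b + d - k))"
    unfolding RW_def
  proof (rule sum.cong[OF refl])
    fix k assume "k \<in> {..N}"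
    show "smult [:inverse (fact k):] ((pderiv ^^ k) (monom p b) * (mpd ^^ k) (monom q d)) =
      monom (smult (of_nat (b choose k)) (p * (pderiv ^^ k) q)) (b + d - k)"
    proof (cases "k \<le> b")
      case True
      then have e: "b - k + d = b + d - k" by simp
      have f: "[:inverse (fact k):] * (of_nat ((b choose k) * fact k) :: 'a poly) = of_nat (b choose k)"
        by (simp add: of_nat_poly)
      show ?thesis
        unfolding higher_pderiv_monom' higher_mpd_monom mult_monom smult_monom e
        by (simp add: f mult.assoc[symmetric] of_nat_poly) (simp add: mult.assoc)
    next
      case False
      then show ?thesis by (simp add: higher_pderiv_monom' binomial_eq_0)
    qed
  qed
  also have "\<dots> = (\<Sum>k\<le>b. monom (smult (of_nat (b choose k)) (p * (pderiv ^^ k) q)) (b + d - k))"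
    by (rule sum.mono_neutral_right) (use assms in \<open>auto simp: binomial_eq_0\<close>)
  finally show ?thesis by (simp add: wm_monom_monom)
qed

lemma mpd_add: "mpd (A + B) = mpd A + mpd B"
  by (rule poly_eqI) (simp add: pderiv_add)

lemma higher_mpd_add: "(mpd ^^ k) (A + B) = (mpd ^^ k) A + (mpd ^^ k) B"
  by (induction k) (simp_all add: mpd_add)

lemma higher_mpd_0 [simp]: "(mpd ^^ k) 0 = 0"
  by (induction k) simp_all

lemma higher_mpd_sum: "(mpd ^^ k) (sum F S) = (\<Sum>x\<in>S. (mpd ^^ k) (F x))"
  by (induction S rule: infinite_finite_induct) (simp_all add: higher_mpd_add)

lemma RW_sum_left: "RW N (sum F S) B = (\<Sum>x\<in>S. RW N (F x) B)"
  unfolding RW_def higher_pderiv_sum sum_distrib_right smult_sum2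
  by (rule sum.swap)

lemma RW_sum_right: "RW N A (sum F S) = (\<Sum>x\<in>S. RW N A (F x))"
  unfolding RW_def higher_mpd_sum sum_distrib_left smult_sum2
  by (rule sum.swap)

lemma wm_sum_left: "weyl_mult (sum F S) B = (\<Sum>x\<in>S. weyl_mult (F x) B)"
  by (induction S rule: infinite_finite_induct) (simp_all add: wm_add_left)

lemma wm_sum_right: "weyl_mult A (sum F S) = (\<Sum>x\<in>S. weyl_mult A (F x))"
  by (induction S rule: infinite_finite_induct) (simp_all add: wm_add_right)

lemma wm_formula:
  assumes "degree A \<le> N"
  shows "weyl_mult A B = RW N A B"
proof -
  have "weyl_mult A B = (\<Sum>b\<le>degree A. \<Sum>d\<le>degree B. weyl_mult (monom (coeff A b) b) (monom (coeff B d) d))"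
    by (subst (1) poly_as_sum_of_monoms[symmetric], subst (1) poly_as_sum_of_monoms[symmetric, of B])
       (simp only: wm_sum_left wm_sum_right, rule sum.swap)
  also have "\<dots> = (\<Sum>b\<le>degree A. \<Sum>d\<le>degree B. RW N (monom (coeff A b) b) (monom (coeff B d) d))"
    using assms by (intro sum.cong refl) (simp add: RW_monom)
  also have "\<dots> = RW N (\<Sum>b\<le>degree A. monom (coeff A b) b) (\<Sum>d\<le>degree B. monom (coeff B d) d)"
    by (simp only: RW_sum_left RW_sum_right, rule sum.swap)
  also have "\<dots> = RW N A B" by (simp only: poly_as_sum_of_monoms)
  finally show ?thesis .
qed


lemma cm_add_left: "cm (A + B) C = cm A C + cm B C"
  by (simp add: cm_def wm_add_left wm_add_right)

lemma cm_add_right: "cm A (B + C) = cm A B + cm A C"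
  by (simp add: cm_def wm_add_left wm_add_right)

lemma cm_smult_left: "cm (smult [:c:] A) B = smult [:c:] (cm A B)"
  by (simp add: cm_def wm_smult_left wm_smult_right_const smult_diff_right)

lemma cm_smult_right: "cm A (smult [:c:] B) = smult [:c:] (cm A B)"
  by (simp add: cm_def wm_smult_left wm_smult_right_const smult_diff_right)

lemma cm_self [simp]: "cm A A = 0"
  by (simp add: cm_def)

lemma cm_swap: "cm B A = - cm A B"
  by (simp add: cm_def)

lemma cm_zero [simp]: "cm 0 A = 0" "cm A 0 = 0"
  by (simp_all add: cm_def)

lemma cm_cY: "cm (monom [:c:] 1) B = smult [:c:] (mpd B)"
proof -
  have "monom [:c:] 1 = smult [:c:] (weyl_Y :: 'a::field_char_0 poly poly)"
    by (simp add: weyl_Y_def smult_monom)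
  then show ?thesis by (simp add: cm_smult_left cm_Y)
qed

lemma cm_cX: "cm A [:[:0, c:]:] = smult [:c:] (pderiv A)"
proof -
  have "[:[:0, c:]:] = smult [:c:] (weyl_X :: 'a::field_char_0 poly poly)"
    by (simp add: weyl_X_def monom_0)
  then show ?thesis by (simp add: cm_smult_right cm_X)
qed

lemma cm_cX_left: "cm [:[:0, c:]:] B = - smult [:c:] (pderiv B)"
  using cm_cX[of B c] cm_swap[of "[:[:0, c:]:]" B] by simp

lemma cm_cY_right: "cm A (monom [:c:] 1) = - smult [:c:] (mpd A)"
  using cm_cY[of c A] cm_swap[of A "monom [:c:] 1"] by simp

section \<open>Leading term of a commutator\<close>

lemma higher_pderiv_gt_degree':
  fixes f :: "'b::{comm_semiring_1,semiring_no_zero_divisors} poly"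
  assumes "degree f < j"
  shows "(pderiv ^^ j) f = 0"
  by (rule poly_eqI) (use assms in \<open>simp add: coeff_higher_pderiv coeff_eq_0\<close>)

lemma coeff_mult_split:
  fixes p q :: "'b::comm_semiring_1 poly"
  assumes "degree p \<le> m" "degree q \<le> n"
  shows "coeff (p * q) (m + n) = coeff p m * coeff q n"
proof -
  have "coeff (p * q) (m + n) = (\<Sum>i\<in>{m}. coeff p i * coeff q (m + n - i))"
    unfolding coeff_mult
  proof (rule sum.mono_neutral_right)
    show "\<forall>i\<in>{..m + n} - {m}. coeff p i * coeff q (m + n - i) = 0"
    proof
      fix i assume "i \<in> {..m + n} - {m}"
      then have "i < m \<or> i > m" by auto
      then show "coeff p i * coeff q (m + n - i) = 0"
        using assms by (auto simp: coeff_eq_0)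
    qed
  qed auto
  then show ?thesis by simp
qed

lemma RW_high:
  assumes "degree A = \<alpha>" "degree B = \<beta>" "\<alpha> + \<beta> \<le> n + 1" "1 \<le> N"
  shows "coeff (RW N A B) n = coeff (A * B) n + coeff (pderiv A * mpd B) n"
proof -
  have "coeff (RW N A B) n = (\<Sum>k\<le>N. coeff (smult [:inverse (fact k):] ((pderiv ^^ k) A * (mpd ^^ k) B)) n)"
    unfolding RW_def coeff_sum ..
  also have "\<dots> = (\<Sum>k\<in>{0,1}. coeff (smult [:inverse (fact k):] ((pderiv ^^ k) A * (mpd ^^ k) B)) n)"
  proof (rule sum.mono_neutral_right)
    show "\<forall>k\<in>{..N} - {0, 1}. coeff (smult [:inverse (fact k):] ((pderiv ^^ k) A * (mpd ^^ k) B)) n = 0"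
    proof
      fix k assume k: "k \<in> {..N} - {0, 1}"
      show "coeff (smult [:inverse (fact k):] ((pderiv ^^ k) A * (mpd ^^ k) B)) n = 0"
      proof (cases "k \<le> \<alpha>")
        case False
        then have "(pderiv ^^ k) A = 0" using assms(1) by (intro higher_pderiv_gt_degree') auto
        then show ?thesis by simp
      next
        case True
        have d1: "degree ((pderiv ^^ k) A) = \<alpha> - k" using assms(1) by (simp add: degree_higher_pderiv)
        have d2: "degree ((mpd ^^ k) B) \<le> \<beta>"
        proof (induction k)
          case (Suc k) then show ?case using degree_mpd_le[of "(mpd ^^ k) B"] by simp
        qed (use assms(2) in simp)
        have "degree ((pderiv ^^ k) A * (mpd ^^ k) B) \<le> \<alpha> - k + \<beta>"
          using degree_mult_le[of "(pderiv ^^ k) A" "(mpd ^^ k) B"] d1 d2 by simp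
        moreover have "\<alpha> - k + \<beta> < n" using True k assms(3) by auto
        ultimately show ?thesis by (simp add: coeff_eq_0)
      qed
    qed
  qed (use assms in auto)
  also have "\<dots> = coeff (A * B) n + coeff (pderiv A * mpd B) n"
    by simp
  finally show ?thesis .
qed


lemma cm_high:
  assumes "degree A = \<alpha>" "degree B = \<beta>" "\<alpha> + \<beta> \<le> n + 1"
  shows "coeff (cm A B) n = coeff (pderiv A * mpd B) n - coeff (pderiv B * mpd A) n"
proof -
  let ?N = "\<alpha> + \<beta> + 1"
  have "weyl_mult A B = RW ?N A B" by (rule wm_formula) (use assms in simp)
  moreover have "weyl_mult B A = RW ?N B A" by (rule wm_formula) (use assms in simp)
  ultimately have "cm A B = RW ?N A B - RW ?N B A" unfolding cm_def by simp
  then show ?thesis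
    using RW_high[OF assms(1,2,3), of ?N] RW_high[OF assms(2,1), of n ?N] assms(3)
    by (simp add: mult.commute)
qed

lemma coeff_pderiv_mpd_top:
  assumes "degree A = \<alpha>" "degree B = \<beta>" "1 \<le> \<alpha> + \<beta>"
  shows "coeff (pderiv A * mpd B) (\<alpha> + \<beta> - 1) = smult (of_nat \<alpha>) (lead_coeff A * pderiv (lead_coeff B))"
proof (cases "\<alpha> = 0")
  case True
  then have "pderiv A = 0" using assms(1) by (simp add: pderiv_eq_0_iff)
  then show ?thesis using True by simp
next
  case False
  then have e: "\<alpha> + \<beta> - 1 = (\<alpha> - 1) + \<beta>" by simp
  have "coeff (pderiv A * mpd B) ((\<alpha> - 1) + \<beta>) = coeff (pderiv A) (\<alpha> - 1) * coeff (mpd B) \<beta>"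
    by (rule coeff_mult_split) (use assms degree_mpd_le[of B] in \<open>auto simp: degree_pderiv\<close>)
  also have "\<dots> = smult (of_nat \<alpha>) (lead_coeff A * pderiv (lead_coeff B))"
    using False assms by (simp add: coeff_pderiv of_nat_poly)
  finally show ?thesis unfolding e .
qed

lemma coeff_pderiv_mpd_high:
  assumes "degree A = \<alpha>" "degree B = \<beta>" "\<alpha> + \<beta> \<le> n"
  shows "coeff (pderiv A * mpd B) n = 0"
proof (cases "\<alpha> = 0")
  case True
  then have "pderiv A = 0" using assms(1) by (simp add: pderiv_eq_0_iff)
  then show ?thesis by simp
next
  case False
  have "degree (pderiv A * mpd B) \<le> (\<alpha> - 1) + \<beta>"
    using degree_mult_le[of "pderiv A" "mpd B"] degree_mpd_le[of B] assms by (simp add: degree_pderiv)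
  then show ?thesis using False assms(3) by (simp add: coeff_eq_0)
qed

lemma cm_top_coeff:
  assumes "degree A = \<alpha>" "degree B = \<beta>" "1 \<le> \<alpha> + \<beta>"
  shows "coeff (cm A B) (\<alpha> + \<beta> - 1) = smult (of_nat \<alpha>) (lead_coeff A * pderiv (lead_coeff B))
      - smult (of_nat \<beta>) (lead_coeff B * pderiv (lead_coeff A))"
  using cm_high[OF assms(1,2), of "\<alpha> + \<beta> - 1"] assms
    coeff_pderiv_mpd_top[OF assms] coeff_pderiv_mpd_top[OF assms(2,1)] by (simp add: add.commute)

lemma cm_above:
  assumes "degree A = \<alpha>" "degree B = \<beta>" "\<alpha> + \<beta> \<le> n"
  shows "coeff (cm A B) n = 0"
  using cm_high[OF assms(1,2), of n] assms coeff_pderiv_mpd_high[OF assms]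
    coeff_pderiv_mpd_high[OF assms(2,1), of n] by (simp add: add.commute)

section \<open>Homogeneous elements\<close>

definition homog :: "int \<Rightarrow> 'a::field_char_0 poly poly \<Rightarrow> bool" where
  "homog n A \<longleftrightarrow> (\<forall>i j. coeff (coeff A j) i \<noteq> 0 \<longrightarrow> int i - int j = n)"

lemma homog_0 [simp]: "homog n 0"
  by (simp add: homog_def)

lemma homog_add: "homog n A \<Longrightarrow> homog n B \<Longrightarrow> homog n (A + B)"
  unfolding homog_def by (metis add.right_neutral coeff_add add_0)

lemma homog_uminus: "homog n A \<Longrightarrow> homog n (- A)"
  unfolding homog_def by simp

lemma homog_diff: "homog n A \<Longrightarrow> homog n B \<Longrightarrow> homog n (A - B)"
  using homog_add[of n A "- B"] homog_uminus[of n B] by simp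

lemma homog_smult: "homog n A \<Longrightarrow> homog n (smult [:c:] A)"
  unfolding homog_def by simp

lemma homog_sum: "(\<And>x. x \<in> S \<Longrightarrow> homog n (F x)) \<Longrightarrow> homog n (sum F S)"
  by (induction S rule: infinite_finite_induct) (simp_all add: homog_add)

lemma homog_row:
  assumes "homog n A"
  shows "coeff A j = (if 0 \<le> n + int j then monom (coeff (coeff A j) (nat (n + int j))) (nat (n + int j)) else 0)"
proof (rule poly_eqI)
  fix i
  show "coeff (coeff A j) i = coeff (if 0 \<le> n + int j then monom (coeff (coeff A j) (nat (n + int j))) (nat (n + int j)) else 0) i"
  proof (cases "coeff (coeff A j) i = 0")
    case True then show ?thesis by (auto simp: coeff_monom)
  next
    case False
    then have "int i - int j = n" using assms unfolding homog_def by blast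
    then show ?thesis by (auto simp: coeff_monom)
  qed
qed

lemma sum_nonzeroE:
  assumes "sum f S \<noteq> 0"
  obtains x where "x \<in> S" "f x \<noteq> 0"
  using assms sum.neutral by metis

lemma homog_mult:
  assumes "homog a U" "homog b V"
  shows "homog (a + b) (U * V)"
  unfolding homog_def
proof (intro allI impI)
  fix i j assume "coeff (coeff (U * V) j) i \<noteq> 0"
  then have "(\<Sum>l\<le>j. coeff (coeff U l * coeff V (j - l)) i) \<noteq> 0"
    by (simp add: coeff_mult coeff_sum)
  then obtain l where l: "l \<le> j" "coeff (coeff U l * coeff V (j - l)) i \<noteq> 0"
    by (auto elim: sum_nonzeroE)
  then have "(\<Sum>r\<le>i. coeff (coeff U l) r * coeff (coeff V (j - l)) (i - r)) \<noteq> 0"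
    by (simp add: coeff_mult)
  then obtain r where r: "r \<le> i" "coeff (coeff U l) r \<noteq> 0" "coeff (coeff V (j - l)) (i - r) \<noteq> 0"
    by (auto elim: sum_nonzeroE)
  have "int r - int l = a" using r assms(1) unfolding homog_def by blast
  moreover have "int (i - r) - int (j - l) = b" using r assms(2) unfolding homog_def by blast
  ultimately show "int i - int j = a + b" using l(1) r(1) by simp
qed

lemma homog_pderiv:
  assumes "homog n A"
  shows "homog (n + 1) (pderiv A)"
  unfolding homog_def
proof (intro allI impI)
  fix i j assume "coeff (coeff (pderiv A) j) i \<noteq> 0"
  then have "coeff (coeff A (Suc j)) i \<noteq> 0" by (simp add: coeff_pderiv of_nat_poly)
  then have "int i - int (Suc j) = n" using assms unfolding homog_def by blast
  then show "int i - int j = n + 1" by simp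
qed

lemma homog_mpd:
  assumes "homog n A"
  shows "homog (n - 1) (mpd A)"
  unfolding homog_def
proof (intro allI impI)
  fix i j assume "coeff (coeff (mpd A) j) i \<noteq> 0"
  then have "coeff (coeff A j) (Suc i) \<noteq> 0" by (simp add: coeff_pderiv)
  then have "int (Suc i) - int j = n" using assms unfolding homog_def by blast
  then show "int i - int j = n - 1" by simp
qed

lemma homog_higher_pderiv: "homog n A \<Longrightarrow> homog (n + int k) ((pderiv ^^ k) A)"
proof (induction k)
  case (Suc k)
  have e: "n + int (Suc k) = (n + int k) + 1" by simp
  show ?case unfolding e funpow.simps comp_apply using homog_pderiv[of "n + int k" "(pderiv ^^ k) A"] Suc by blast
qed simp

lemma homog_higher_mpd: "homog n A \<Longrightarrow> homog (n - int k) ((mpd ^^ k) A)"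
proof (induction k)
  case (Suc k)
  then show ?case using homog_mpd[of "n - int k" "(mpd ^^ k) A"] by (simp add: algebra_simps)
qed simp

lemma homog_RW:
  assumes "homog n A" "homog m B"
  shows "homog (n + m) (RW N A B)"
  unfolding RW_def
proof (rule homog_sum)
  fix k
  have "homog ((n + int k) + (m - int k)) ((pderiv ^^ k) A * (mpd ^^ k) B)"
    by (rule homog_mult[OF homog_higher_pderiv[OF assms(1)] homog_higher_mpd[OF assms(2)]])
  then show "homog (n + m) (smult [:inverse (fact k):] ((pderiv ^^ k) A * (mpd ^^ k) B))"
    by (intro homog_smult) simp
qed

lemma homog_wm:
  assumes "homog n A" "homog m B"
  shows "homog (n + m) (weyl_mult A B)"
  using homog_RW[OF assms] wm_formula[of A "degree A" B] by simp

lemma homog_cm: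
  assumes "homog n A" "homog m B"
  shows "homog (n + m) (cm A B)"
  unfolding cm_def using homog_wm[OF assms] homog_wm[OF assms(2,1)] by (simp add: homog_diff add.commute)

lemma homog_one [simp]: "homog 0 1"
  unfolding homog_def by (auto simp: coeff_1 split: if_splits)

lemma homog_nonzero_coeff:
  assumes "homog n A" "A \<noteq> 0"
  obtains i where "coeff (coeff A (degree A)) i \<noteq> 0" "int i - int (degree A) = n"
proof -
  have "lead_coeff A \<noteq> 0" using assms by simp
  then obtain i where "coeff (lead_coeff A) i \<noteq> 0" by (metis leading_coeff_0_iff)
  then show ?thesis using that assms(1) unfolding homog_def by blast
qed

lemma homog_unique:
  assumes "homog n A" "homog m A" "A \<noteq> 0"
  shows "n = m"
  using homog_nonzero_coeff[OF assms(1,3)] assms(2) unfolding homog_def by metis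

lemma homog_deg_ge:
  assumes "homog n A" "A \<noteq> 0"
  shows "0 \<le> n + int (degree A)"
  using homog_nonzero_coeff[OF assms] by force

lemma homog_lead:
  assumes "homog n A" "A \<noteq> 0"
  defines "e \<equiv> nat (n + int (degree A))"
  shows "lead_coeff A = monom (coeff (lead_coeff A) e) e" "coeff (lead_coeff A) e \<noteq> 0"
proof -
  show "lead_coeff A = monom (coeff (lead_coeff A) e) e"
    using homog_row[OF assms(1), of "degree A"] homog_deg_ge[OF assms(1,2)] unfolding e_def by simp
  then show "coeff (lead_coeff A) e \<noteq> 0"
    using assms(2) by (metis leading_coeff_0_iff monom_eq_0_iff)
qed

lemma cm_homog_det:
  assumes hu: "homog n u" and hv: "homog m v" and u0: "u \<noteq> 0" and v0: "v \<noteq> 0"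
    and det: "int (degree u) * m \<noteq> int (degree v) * n"
  shows "cm u v \<noteq> 0" "degree (cm u v) = degree u + degree v - 1" "1 \<le> degree u + degree v"
proof -
  define \<alpha> where "\<alpha> = degree u"
  define \<beta> where "\<beta> = degree v"
  define e where "e = nat (n + int \<alpha>)"
  define e' where "e' = nat (m + int \<beta>)"
  define c where "c = coeff (lead_coeff u) e"
  define d where "d = coeff (lead_coeff v) e'"
  have lu: "lead_coeff u = monom c e" and c0: "c \<noteq> 0"
    using homog_lead[OF hu u0] unfolding c_def e_def \<alpha>_def by auto
  have lv: "lead_coeff v = monom d e'" and d0: "d \<noteq> 0"
    using homog_lead[OF hv v0] unfolding d_def e'_def \<beta>_def by auto
  have ie: "int e = n + int \<alpha>" using homog_deg_ge[OF hu u0] unfolding e_def \<alpha>_def by simp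
  have ie': "int e' = m + int \<beta>" using homog_deg_ge[OF hv v0] unfolding e'_def \<beta>_def by simp
  show ab: "1 \<le> degree u + degree v"
  proof (rule ccontr)
    assume "\<not> 1 \<le> degree u + degree v"
    then have "degree u = 0" "degree v = 0" by auto
    then show False using det by simp
  qed
  have nat_ne: "\<alpha> * e' \<noteq> \<beta> * e"
  proof
    assume "\<alpha> * e' = \<beta> * e"
    then have "int \<alpha> * int e' = int \<beta> * int e" by (metis of_nat_mult)
    then have "int \<alpha> * (m + int \<beta>) = int \<beta> * (n + int \<alpha>)" unfolding ie ie' .
    then have "int \<alpha> * m = int \<beta> * n" by (simp add: algebra_simps)
    then show False using det unfolding \<alpha>_def \<beta>_def by simp
  qed
  have top: "coeff (cm u v) (\<alpha> + \<beta> - 1) = smult (of_nat \<alpha>) (monom c e * pderiv (monom d e'))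
      - smult (of_nat \<beta>) (monom d e' * pderiv (monom c e))"
    using cm_top_coeff[of u \<alpha> v \<beta>] ab lu lv unfolding \<alpha>_def \<beta>_def by simp
  have "coeff (coeff (cm u v) (\<alpha> + \<beta> - 1)) (e + e' - 1) = of_nat \<alpha> * c * d * of_nat e' - of_nat \<beta> * d * c * of_nat e"
    unfolding top by (cases "e = 0"; cases "e' = 0") (simp_all add: pderiv_monom mult_monom coeff_monom)
  also have "\<dots> = c * d * (of_nat (\<alpha> * e') - of_nat (\<beta> * e))" by (simp add: algebra_simps)
  also have "\<dots> \<noteq> 0" using c0 d0 nat_ne by (simp del: of_nat_mult)
  finally have nz: "coeff (cm u v) (\<alpha> + \<beta> - 1) \<noteq> 0" by force
  then show "cm u v \<noteq> 0" by force
  have "degree (cm u v) \<le> \<alpha> + \<beta> - 1"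
    by (rule degree_le) (use cm_above[of u \<alpha> v \<beta>] ab in \<open>auto simp: \<alpha>_def \<beta>_def\<close>)
  moreover have "\<alpha> + \<beta> - 1 \<le> degree (cm u v)" using nz le_degree by blast
  ultimately show "degree (cm u v) = degree u + degree v - 1" unfolding \<alpha>_def \<beta>_def by simp
qed




section \<open>Homogeneous components\<close>

definition comp :: "int \<Rightarrow> 'a::field_char_0 poly poly \<Rightarrow> 'a poly poly" where
  "comp k A = (\<Sum>j\<le>degree A. monom (if 0 \<le> k + int j then monom (coeff (coeff A j) (nat (k + int j))) (nat (k + int j)) else 0) j)"

lemma coeff_comp_row:
  "coeff (comp k A) j = (if 0 \<le> k + int j then monom (coeff (coeff A j) (nat (k + int j))) (nat (k + int j)) else 0)"
proof -
  have "coeff (comp k A) j = (\<Sum>l\<le>degree A. if l = j then (if 0 \<le> k + int l then monom (coeff (coeff A l) (nat (k + int l))) (nat (k + int l)) else 0) else 0)"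
    unfolding comp_def coeff_sum by (intro sum.cong refl) (auto simp: coeff_monom)
  also have "\<dots> = (if j \<le> degree A then (if 0 \<le> k + int j then monom (coeff (coeff A j) (nat (k + int j))) (nat (k + int j)) else 0) else 0)"
    by (simp add: sum.delta'[of "{..degree A}" j] cong: if_cong)
  also have "\<dots> = (if 0 \<le> k + int j then monom (coeff (coeff A j) (nat (k + int j))) (nat (k + int j)) else 0)"
    by (auto simp: coeff_eq_0)
  finally show ?thesis .
qed

lemma coeff_comp: "coeff (coeff (comp k A) j) i = (if int i - int j = k then coeff (coeff A j) i else 0)"
  unfolding coeff_comp_row by (auto simp: coeff_monom)

lemma comp_add: "comp k (A + B) = comp k A + comp k B"
  by (rule poly_eqI, rule poly_eqI) (simp add: coeff_comp)

lemma comp_diff: "comp k (A - B) = comp k A - comp k B"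
  by (rule poly_eqI, rule poly_eqI) (simp add: coeff_comp)

lemma comp_homog:
  assumes "homog n A"
  shows "comp k A = (if k = n then A else 0)"
  by (rule poly_eqI, rule poly_eqI) (use assms in \<open>auto simp: coeff_comp homog_def\<close>)

lemma homog_comp: "homog k (comp k A)"
  unfolding homog_def by (simp add: coeff_comp)

lemma mass_decomp:
  assumes "weyl_mass P \<le> 2"
  shows "\<exists>p1 p2 P1 P2. p2 < p1 \<and> homog p1 P1 \<and> homog p2 P2 \<and> P = P1 + P2"
proof -
  define D where "D = {int i - int j | i j. coeff (coeff P j) i \<noteq> 0}"
  have "D \<subseteq> (\<lambda>(j, i). int i - int j) ` (SIGMA j:{..degree P}. {..degree (coeff P j)})"
  proof
    fix x assume "x \<in> D"
    then obtain i j where x: "x = int i - int j" "coeff (coeff P j) i \<noteq> 0" unfolding D_def by blast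
    then have "j \<le> degree P" "i \<le> degree (coeff P j)"
      by (metis coeff_0 le_degree, metis le_degree)
    then show "x \<in> (\<lambda>(j, i). int i - int j) ` (SIGMA j:{..degree P}. {..degree (coeff P j)})"
      using x by force
  qed
  then have fin: "finite D" by (rule finite_subset) auto
  have card: "card D \<le> 2" using assms unfolding weyl_mass_def D_def .
  obtain p1 p2 where p: "p2 < p1" "D \<subseteq> {p1, p2}"
  proof (cases "card D")
    case 0
    then have "D = {}" using fin by simp
    then show ?thesis using that[of 0 1] by simp
  next
    case (Suc k)
    show ?thesis
    proof (cases k)
      case 0
      then obtain x where "D = {x}" using Suc card_1_singletonE by (metis One_nat_def)
      then show ?thesis using that[of "x - 1" x] by simp
    next
      case (Suc k')
      then have "card D = 2" using card \<open>card D = Suc k\<close> by simp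
      then obtain x y where xy: "D = {x, y}" "x \<noteq> y" by (meson card_2_iff)
      show ?thesis
      proof (cases "x < y")
        case True then show ?thesis using that[of x y] xy by auto
      next
        case False then show ?thesis using that[of y x] xy by auto
      qed
    qed
  qed
  have "P = comp p1 P + comp p2 P"
  proof (rule poly_eqI, rule poly_eqI)
    fix j i
    show "coeff (coeff P j) i = coeff (coeff (comp p1 P + comp p2 P) j) i"
    proof (cases "coeff (coeff P j) i = 0")
      case True then show ?thesis by (simp add: coeff_comp)
    next
      case False
      then have "int i - int j \<in> D" unfolding D_def by blast
      then have "int i - int j = p1 \<or> int i - int j = p2" using p by blast
      then show ?thesis using p(1) by (auto simp: coeff_comp)
    qed
  qed
  then show ?thesis using p(1) homog_comp by blast
qed

lemma homog_deg0:
  assumes "homog n u" "degree u = 0"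
  shows "u = [:monom (coeff (coeff u 0) (nat n)) (nat n):]" "u \<noteq> 0 \<Longrightarrow> 0 \<le> n"
proof -
  have r: "coeff u 0 = (if 0 \<le> n then monom (coeff (coeff u 0) (nat n)) (nat n) else 0)"
    using homog_row[OF assms(1), of 0] by (simp split: if_splits)
  have "u = [:coeff u 0:]" using assms(2) by (metis degree_0_id)
  then show "u = [:monom (coeff (coeff u 0) (nat n)) (nat n):]"
    using r by (metis coeff_monom monom_eq_0_iff)
  show "u \<noteq> 0 \<Longrightarrow> 0 \<le> n" using homog_deg_ge[OF assms(1)] assms(2) by simp
qed

lemma KX_neg:
  assumes "homog n u" "degree u = 0" "n < 0"
  shows "u = 0"
  using homog_deg0(2)[OF assms(1,2)] assms(3) by force

lemma KX_zero:
  assumes "homog 0 u" "degree u = 0"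
  shows "degree (coeff u 0) = 0"
  using homog_deg0(1)[OF assms] by (metis coeff_pCons_0 degree_pCons_0 monom_0 nat_0)

lemma homog_negdeg:
  assumes "homog (- int k) v" "degree v = k"
  shows "v = monom [:coeff (coeff v k) 0:] k"
proof (rule poly_eqI)
  fix j
  show "coeff v j = coeff (monom [:coeff (coeff v k) 0:] k) j"
  proof (cases "j = k")
    case True
    then show ?thesis using homog_row[OF assms(1), of k] by (simp add: monom_0)
  next
    case False
    show ?thesis
    proof (cases "j < k")
      case True
      then show ?thesis using homog_row[OF assms(1), of j] by (auto simp: coeff_monom)
    next
      case False
      then have "j > k" using \<open>j \<noteq> k\<close> by simp
      then show ?thesis using assms(2) by (simp add: coeff_eq_0 coeff_monom)
    qed
  qed
qed

abbreviation inKY :: "'a::field_char_0 poly poly \<Rightarrow> bool" where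
  "inKY A \<equiv> \<forall>j. degree (coeff A j) = 0"

lemma mpd_eq_0_imp: "mpd A = 0 \<Longrightarrow> inKY A"
  by (metis coeff_0 coeff_mpd pderiv_eq_0_iff)

lemma pderiv_eq_0_imp: "pderiv (A::'a::field_char_0 poly poly) = 0 \<Longrightarrow> degree A = 0"
  by (simp add: pderiv_eq_0_iff)

lemma KY_homog_deg:
  assumes "homog n A" "inKY A" "A \<noteq> 0"
  shows "int (degree A) = - n"
proof -
  obtain i where i: "coeff (coeff A (degree A)) i \<noteq> 0" "int i - int (degree A) = n"
    using homog_nonzero_coeff[OF assms(1,3)] by blast
  then have "i = 0" using assms(2) by (metis coeff_eq_0 gr0I)
  then show ?thesis using i by simp
qed

lemma KY_pos:
  assumes "homog n A" "inKY A" "0 < n"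
  shows "A = 0"
  using KY_homog_deg[OF assms(1,2)] assms(3) by force

lemma mpd_exact:
  assumes "homog m v" "v \<noteq> 0" "0 < m + int (degree v)"
  shows "degree (mpd v) = degree v"
proof -
  define e where "e = nat (m + int (degree v))"
  have l: "lead_coeff v = monom (coeff (lead_coeff v) e) e" "coeff (lead_coeff v) e \<noteq> 0"
    using homog_lead[OF assms(1,2)] unfolding e_def by auto
  have "e > 0" using assms(3) unfolding e_def by simp
  then have "pderiv (lead_coeff v) \<noteq> 0"
    by (subst l(1)) (use l(2) in \<open>simp add: pderiv_monom\<close>)
  then have "coeff (mpd v) (degree v) \<noteq> 0" by simp
  then have "degree v \<le> degree (mpd v)" by (rule le_degree)
  then show ?thesis using degree_mpd_le[of v] by simp
qed


section \<open>Degree zero elements commute\<close>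

lemma homog0_opw:
  assumes "homog 0 u"
  shows "\<exists>l. opw u (monom 1 k) = smult l (monom 1 k)"
proof -
  define l where "l = (\<Sum>j\<le>degree u. coeff (coeff u j) j * of_nat ((k choose j) * fact j))"
  have "opw u (monom 1 k) = (\<Sum>j\<le>degree u. coeff u j * (pderiv ^^ j) (monom 1 k))"
    by (simp add: opw_def)
  also have "\<dots> = (\<Sum>j\<le>degree u. monom (coeff (coeff u j) j * of_nat ((k choose j) * fact j)) k)"
  proof (rule sum.cong[OF refl])
    fix j
    have r: "coeff u j = monom (coeff (coeff u j) j) j"
      using homog_row[OF assms, of j] by simp
    show "coeff u j * (pderiv ^^ j) (monom 1 k) = monom (coeff (coeff u j) j * of_nat ((k choose j) * fact j)) k"
    proof (cases "j \<le> k")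
      case True
      then show ?thesis by (subst r) (simp add: higher_pderiv_monom' mult_monom of_nat_poly)
    next
      case False
      then show ?thesis by (simp add: higher_pderiv_monom' binomial_eq_0)
    qed
  qed
  also have "\<dots> = smult l (monom 1 k)"
    unfolding l_def by (simp add: smult_monom monom_sum[symmetric])
  finally show ?thesis by blast
qed

lemma homog0_commute:
  assumes "homog 0 u" "homog 0 v"
  shows "cm u v = 0"
proof (rule opw_zero_imp)
  fix f
  have mon: "opw (cm u v) (monom 1 k) = 0" for k
  proof -
    obtain a where a: "opw u (monom 1 k) = smult a (monom 1 k)" using homog0_opw[OF assms(1)] by blast
    obtain b where b: "opw v (monom 1 k) = smult b (monom 1 k)" using homog0_opw[OF assms(2)] by blast
    show ?thesis unfolding cm_def opw_diff opw_mult
      by (simp add: a b opw_arg_smult mult.commute)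
  qed
  have "opw (cm u v) f = opw (cm u v) (\<Sum>i\<le>degree f. smult (coeff f i) (monom 1 i))"
    by (simp add: smult_monom poly_as_sum_of_monoms)
  also have "\<dots> = 0" by (simp add: opw_arg_sum opw_arg_smult mon)
  finally show "opw (cm u v) f = 0" .
qed

section \<open>Homogeneous solutions of [u,v] = 1\<close>

lemma cm_one_nonzero:
  assumes "cm u v = 1"
  shows "u \<noteq> 0" "v \<noteq> 0"
  using assms by auto

lemma hom_one:
  assumes hu: "homog n u" and hv: "homog m v" and nm: "n + m = 0" and uv: "cm u v = 1"
  shows "(\<exists>c. c \<noteq> 0 \<and> u = monom [:c:] 1 \<and> v = [:[:0, inverse c:]:])
       \<or> (\<exists>c. c \<noteq> 0 \<and> u = [:[:0, c:]:] \<and> v = monom [:- inverse c:] 1)"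
proof -
  have u0: "u \<noteq> 0" and v0: "v \<noteq> 0" using uv by auto
  show ?thesis
  proof (cases "int (degree u) * m = int (degree v) * n")
    case True
    have "n = 0"
    proof (rule ccontr)
      assume "n \<noteq> 0"
      have mn: "m = - n" using nm by simp
      from True have "int (degree u) * (- n) = int (degree v) * n" unfolding mn .
      then have "n * (int (degree u) + int (degree v)) = 0" by (simp add: algebra_simps)
      then have "degree u = 0" "degree v = 0" using \<open>n \<noteq> 0\<close> by auto
      then show False using homog_deg_ge[OF hu u0] homog_deg_ge[OF hv v0] nm \<open>n \<noteq> 0\<close> by simp
    qed
    then have "m = 0" using nm by simp
    then have "cm u v = 0" using homog0_commute hu hv \<open>n = 0\<close> by blast
    then show ?thesis using uv by simp
  next
    case False
    note det0 = False
    note det = cm_homog_det[OF hu hv u0 v0 False]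
    have "degree (cm u v) = 0" using uv by simp
    then have s: "degree u + degree v = 1" using det by simp
    show ?thesis
    proof (cases "degree u = 0")
      case True
      then have dv: "degree v = 1" using s by simp
      have "0 \<le> m + 1" using homog_deg_ge[OF hv v0] dv by simp
      moreover have "n \<noteq> 0" using False True dv by simp
      moreover have "0 \<le> n" using homog_deg0(2)[OF hu True u0] .
      ultimately have n1: "n = 1" using nm by simp
      then have m1: "m = - int 1" using nm by simp
      define c where "c = coeff (coeff u 0) 1"
      have uu: "u = [:[:0, c:]:]"
        using homog_deg0(1)[OF hu True] n1 unfolding c_def by (simp add: monom_Suc monom_0)
      then have c0: "c \<noteq> 0" using u0 by auto
      define d where "d = coeff (coeff v 1) 0"
      have vv: "v = monom [:d:] 1" using homog_negdeg[OF hv[unfolded m1] dv] unfolding d_def by simp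
      have "cm u v = [:[:- (c * d):]:]"
        unfolding uu vv cm_cX_left by (simp add: pderiv_monom monom_0)
      then have "- (c * d) = 1" using uv by (metis one_pCons pCons_eq_iff)
      then have "c * d = - 1" by (metis minus_minus)
      then have "d = - inverse c" using c0 by (simp add: field_simps)
      then show ?thesis using uu vv c0 by blast
    next
      case False
      then have du: "degree u = 1" and dv: "degree v = 0" using s by auto
      have "0 \<le> n + 1" using homog_deg_ge[OF hu u0] du by simp
      moreover have "m \<noteq> 0" using det0 du dv by simp
      moreover have "0 \<le> m" using homog_deg0(2)[OF hv dv v0] .
      ultimately have m1: "m = 1" using nm by simp
      then have n1: "n = - int 1" using nm by simp
      define d where "d = coeff (coeff v 0) 1"
      have vv: "v = [:[:0, d:]:]"
        using homog_deg0(1)[OF hv dv] m1 unfolding d_def by (simp add: monom_Suc monom_0)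
      define c where "c = coeff (coeff u 1) 0"
      have uu: "u = monom [:c:] 1" using homog_negdeg[OF hu[unfolded n1] du] unfolding c_def by simp
      then have c0: "c \<noteq> 0" using u0 by auto
      have "cm u v = [:[:c * d:]:]"
        unfolding uu vv cm_cY by (simp add: map_poly_pCons pderiv_pCons)
      then have "c * d = 1" using uv by (metis one_pCons pCons_eq_iff)
      then have "d = inverse c" using c0 by (simp add: field_simps)
      then show ?thesis using uu vv c0 by blast
    qed
  qed
qed

section \<open>Commuting homogeneous elements of equal degree\<close>

lemma cm_diff_right: "cm A (B - C) = cm A B - cm A C"
  using cm_add_right[of A "B - C" C] by simp

lemma cm_diff_left: "cm (A - B) C = cm A C - cm B C"
  using cm_add_left[of "A - B" B C] by simp

lemma monom_diff': "monom a n - monom b n = monom (a - b) n"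
  by (rule poly_eqI) (simp add: coeff_monom)

lemma homog_prop:
  assumes hP: "homog a P" and hQ: "homog a Q" and a0: "a \<noteq> 0" and P0: "P \<noteq> 0"
    and dQ: "degree Q = degree P" and c: "cm P Q = 0"
  shows "\<exists>l. Q = smult [:l:] P"
proof -
  define \<alpha> where "\<alpha> = degree P"
  define e where "e = nat (a + int \<alpha>)"
  show ?thesis
  proof (cases "Q = 0")
    case True then show ?thesis by (intro exI[of _ 0]) simp
  next
    case Q0: False
    have lP: "lead_coeff P = monom (coeff (lead_coeff P) e) e" "coeff (lead_coeff P) e \<noteq> 0"
      using homog_lead[OF hP P0] unfolding e_def \<alpha>_def by auto
    have lQ: "lead_coeff Q = monom (coeff (lead_coeff Q) e) e"
      using homog_lead[OF hQ Q0] dQ unfolding e_def \<alpha>_def by auto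
    define l where "l = coeff (lead_coeff Q) e / coeff (lead_coeff P) e"
    define R where "R = Q - smult [:l:] P"
    have hR: "homog a R" unfolding R_def by (intro homog_diff hQ homog_smult hP)
    define cp where "cp = coeff (lead_coeff P) e"
    define cq where "cq = coeff (lead_coeff Q) e"
    have lP': "lead_coeff P = monom cp e" and cp0: "cp \<noteq> 0" using lP unfolding cp_def by auto
    have lQ': "lead_coeff Q = monom cq e" using lQ unfolding cq_def by auto
    have "coeff R \<alpha> = 0"
    proof -
      have "coeff R \<alpha> = lead_coeff Q - smult l (lead_coeff P)"
        unfolding R_def \<alpha>_def using dQ by simp
      also have "\<dots> = monom (cq - l * cp) e" unfolding lP' lQ' by (simp add: smult_monom monom_diff')
      also have "\<dots> = 0" using cp0 unfolding l_def cp_def[symmetric] cq_def[symmetric] by simp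
      finally show ?thesis .
    qed
    have dR: "degree R \<le> \<alpha>"
      unfolding R_def \<alpha>_def using dQ by (metis degree_diff_le degree_smult_le le_refl order_trans)
    have cR: "cm P R = 0"
      unfolding R_def using c by (simp add: cm_diff_right cm_smult_right)
    show ?thesis
    proof (cases "R = 0")
      case True then show ?thesis unfolding R_def by auto
    next
      case False
      have "degree R \<noteq> \<alpha>" using \<open>coeff R \<alpha> = 0\<close> False by (metis leading_coeff_0_iff)
      then have "degree R < \<alpha>" using dR by simp
      then have "int (degree P) * a \<noteq> int (degree R) * a" using a0 unfolding \<alpha>_def by simp
      then have "cm P R \<noteq> 0" using cm_homog_det(1)[OF hP hR P0 False] by blast
      then show ?thesis using cR by simp
    qed
  qed
qed




lemma ar_A1: fixes p2 a b :: int assumes "p2 \<le> -2" "a \<ge> - p2" "b \<ge> a - 1" shows "a * (p2 + 2) \<noteq> b * p2"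
proof
  assume eq: "a * (p2 + 2) = b * p2"
  have "(a - 1) * (- p2) \<le> b * (- p2)" by (rule mult_right_mono) (use assms in auto)
  then have "- (a * p2) + p2 \<le> - (b * p2)" by (simp add: algebra_simps)
  moreover have "a * p2 + 2 * a = b * p2" using eq by (simp add: algebra_simps)
  ultimately show False using assms by linarith
qed

lemma ar_A2: fixes p2 a b :: int assumes "p2 \<le> 0" "a \<ge> - p2" "a \<ge> b - 1" "b \<ge> 2" shows "a * (p2 - 2) \<noteq> b * p2"
proof
  assume eq: "a * (p2 - 2) = b * p2"
  have "b * (- p2) \<le> (a + 1) * (- p2)" by (rule mult_right_mono) (use assms in auto)
  then have "- (b * p2) \<le> - (a * p2) - p2" by (simp add: algebra_simps)
  moreover have "a * p2 - 2 * a = b * p2" using eq by (simp add: algebra_simps)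
  ultimately show False using assms by linarith
qed

lemma ar_B1: fixes p1 a b :: int assumes "p1 \<ge> 0" "a = b + 1" "b \<ge> 0" shows "a * (p1 + 2) \<noteq> b * p1"
  using assms(1,2,3) int_distrib(1,2) by fastforce

lemma ar_B2: fixes q1 a b :: int assumes "q1 \<ge> 0" "b = a + 1" "a \<ge> 0" shows "a * q1 \<noteq> b * (q1 + 2)"
proof
  assume "a * q1 = b * (q1 + 2)"
  then have "a * q1 = a * q1 + 2 * a + q1 + 2" using assms(2) by (simp add: algebra_simps)
  then show False using assms by linarith
qed

lemma ar_E: fixes a b x1 y1 x2 y2 :: int
  assumes "x1 * b = y1 * a" "x2 * a = y2 * b" "x1 + y2 = x2 + y1" "a > 0" "b > 0" "x2 \<ge> b" "x1 \<ge> 0"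
  shows "a = b"
proof -
  have "(a - b) * (b * x1 + a * x2) = a * b * x1 - b * (x1 * b) + a * (x2 * a) - a * b * x2"
    by (simp add: algebra_simps)
  also have "\<dots> = a * b * (x1 - y1 + y2 - x2)" unfolding assms(1,2) by (simp add: algebra_simps)
  also have "\<dots> = 0" using assms(3) by simp
  finally have z: "(a - b) * (b * x1 + a * x2) = 0" .
  have "b * x1 \<ge> 0" using assms by simp
  moreover have "a * x2 > 0" using assms by simp
  ultimately have "b * x1 + a * x2 \<noteq> 0" by linarith
  then show ?thesis using z by simp
qed

definition goal_aut :: "'a::field_char_0 poly poly \<Rightarrow> 'a poly poly \<Rightarrow> bool" where
  "goal_aut P Q \<longleftrightarrow> (\<exists>\<tau>. weyl_aut \<tau> \<and> P = \<tau> weyl_Y \<and> Q = \<tau> weyl_X)"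

lemma FY:
  assumes "cm P Q = 1" "c \<noteq> 0" "P = monom [:c:] 1 + F" "Q = [:[:0, inverse c:]:] + G"
    "degree F = 0" "inKY G" "degree (coeff F 0) = 0 \<or> degree G = 0"
  shows "goal_aut P Q"
proof -
  have "F = [:coeff F 0:]" using assms(5) by (metis degree_0_id)
  then show ?thesis unfolding goal_aut_def using formY[OF assms(1,2), of "coeff F 0" G] assms by metis
qed

lemma FX:
  assumes "cm P Q = 1" "c \<noteq> 0" "P = [:[:0, c:]:] + G" "Q = monom [:- inverse c:] 1 + F"
    "degree F = 0" "inKY G" "degree (coeff F 0) = 0 \<or> degree G = 0"
  shows "goal_aut P Q"
proof -
  have "F = [:coeff F 0:]" using assms(5) by (metis degree_0_id)
  moreover have "- inverse c \<noteq> 0" using assms(2) by simp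
  ultimately show ?thesis unfolding goal_aut_def using formX[OF assms(1,2), of "- inverse c" G "coeff F 0"] assms by metis
qed

lemma smult_const_diff: "smult [:(m::'a::field_char_0) - l:] X = smult [:m:] X - smult [:l:] X"
  by (rule poly_eqI, rule poly_eqI) (simp add: algebra_simps)

lemma homog_cY: "homog (-1) (monom [:c:] 1)"
  unfolding homog_def
proof (intro allI impI)
  fix i j assume h: "coeff (coeff (monom [:c:] 1) j) i \<noteq> 0"
  then have "j = 1" by (auto simp: coeff_monom split: if_splits)
  moreover have "i = 0" using h \<open>j = 1\<close> by (cases i) auto
  ultimately show "int i - int j = -1" by simp
qed

lemma smult_neg_const: "smult [:- (a::'a::field_char_0):] X = - smult [:a:] X"
  by (rule poly_eqI, rule poly_eqI) (simp add: mult_minus_left)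

lemma homog_cX: "homog 1 [:[:0, c:]:]"
  unfolding homog_def
proof (intro allI impI)
  fix i j assume h: "coeff (coeff [:[:0, c:]:] j) i \<noteq> 0"
  then have "j = 0" by (cases j) auto
  moreover have "i = 1" using h \<open>j = 0\<close> by (cases i; cases "i - 1") auto
  ultimately show "int i - int j = 1" by simp
qed

lemma cm_cY_zero: "c \<noteq> 0 \<Longrightarrow> cm (monom [:c:] 1) B = 0 \<Longrightarrow> inKY B"
  using cm_cY[of c B] mpd_eq_0_imp by simp

lemma cm_cX_zero: "c \<noteq> 0 \<Longrightarrow> cm A [:[:0, c:]:] = 0 \<Longrightarrow> degree A = 0"
  using cm_cX[of A c] pderiv_eq_0_imp by simp

lemma cm_cX_left_zero: "c \<noteq> 0 \<Longrightarrow> cm [:[:0, c:]:] B = 0 \<Longrightarrow> degree B = 0"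
  using cm_cX_left[of c B] pderiv_eq_0_imp by simp

lemma cm_cY_right_zero: "c \<noteq> 0 \<Longrightarrow> cm A (monom [:c:] 1) = 0 \<Longrightarrow> inKY A"
  using cm_cY_right[of A c] mpd_eq_0_imp by simp

lemma cY_homog_deg: "c \<noteq> 0 \<Longrightarrow> homog n (monom [:c:] 1) \<Longrightarrow> n = -1"
  using homog_unique[OF _ homog_cY] by fastforce

lemma cX_homog_deg: "c \<noteq> 0 \<Longrightarrow> homog n [:[:0, c:]:] \<Longrightarrow> n = 1"
  using homog_unique[OF _ homog_cX] by fastforce

lemma KX_KY_commute:
  assumes hA: "homog n A" and dA: "degree A = 0" and hB: "homog m B" and kB: "inKY B" and c: "cm A B = 0"
  shows "degree (coeff A 0) = 0 \<or> degree B = 0"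
proof (rule ccontr)
  assume nt: "\<not> ?thesis"
  then have A0: "A \<noteq> 0" and dB: "degree B \<noteq> 0" by auto
  then have B0: "B \<noteq> 0" by auto
  have "n \<noteq> 0" using KX_zero[OF _ dA] hA nt by blast
  then have "int (degree A) * m \<noteq> int (degree B) * n" using dA dB by simp
  then show False using cm_homog_det(1)[OF hA hB A0 B0] c by blast
qed

locale clsf =
  fixes P1 P2 Q1 Q2 :: "'a::field_char_0 poly poly" and p1 p2 q1 q2 :: int
  assumes hP1: "homog p1 P1" and hP2: "homog p2 P2" and hQ1: "homog q1 Q1" and hQ2: "homog q2 Q2"
    and pp: "p2 < p1" and qq: "q2 < q1" and PQ: "cm (P1 + P2) (Q1 + Q2) = 1"
begin

lemma F: "(if p1 + q1 = k then cm P1 Q1 else 0) + (if p1 + q2 = k then cm P1 Q2 else 0)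
    + (if p2 + q1 = k then cm P2 Q1 else 0) + (if p2 + q2 = k then cm P2 Q2 else 0)
    = (if k = 0 then 1 else 0)"
proof -
  have "comp k (cm (P1 + P2) (Q1 + Q2)) = comp k 1" using PQ by simp
  moreover have "comp k 1 = (if k = 0 then 1 else 0)" by (rule comp_homog[OF homog_one])
  moreover have "comp k (cm (P1 + P2) (Q1 + Q2)) = comp k (cm P1 Q1) + comp k (cm P1 Q2) + comp k (cm P2 Q1) + comp k (cm P2 Q2)"
    by (simp add: cm_add_left cm_add_right comp_add add.assoc)
  moreover have "comp k (cm P1 Q1) = (if p1 + q1 = k then cm P1 Q1 else 0)"
    using comp_homog[OF homog_cm[OF hP1 hQ1]] by auto
  moreover have "comp k (cm P1 Q2) = (if p1 + q2 = k then cm P1 Q2 else 0)"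
    using comp_homog[OF homog_cm[OF hP1 hQ2]] by auto
  moreover have "comp k (cm P2 Q1) = (if p2 + q1 = k then cm P2 Q1 else 0)"
    using comp_homog[OF homog_cm[OF hP2 hQ1]] by auto
  moreover have "comp k (cm P2 Q2) = (if p2 + q2 = k then cm P2 Q2 else 0)"
    using comp_homog[OF homog_cm[OF hP2 hQ2]] by auto
  ultimately show ?thesis by simp
qed

lemma c11: "cm P1 Q1 = (if p1 + q1 = 0 then 1 else 0)"
  using F[of "p1 + q1"] pp qq by auto

lemma c22: "cm P2 Q2 = (if p2 + q2 = 0 then 1 else 0)"
  using F[of "p2 + q2"] pp qq by auto

lemma cne:
  assumes "p1 + q2 \<noteq> p2 + q1"
  shows "cm P1 Q2 = (if p1 + q2 = 0 then 1 else 0)" "cm P2 Q1 = (if p2 + q1 = 0 then 1 else 0)"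
  using F[of "p1 + q2"] F[of "p2 + q1"] pp qq assms by auto

lemma ceq:
  assumes "p1 + q2 = p2 + q1"
  shows "cm P1 Q2 + cm P2 Q1 = (if p1 + q2 = 0 then 1 else 0)"
  using F[of "p1 + q2"] pp qq assms by auto

lemma some_zero: "p1 + q1 = 0 \<or> p1 + q2 = 0 \<or> p2 + q1 = 0 \<or> p2 + q2 = 0"
  using F[of 0] by (auto split: if_splits)

lemma caseA:
  assumes d11: "p1 + q1 = 0"
  shows "goal_aut (P1 + P2) (Q1 + Q2)"
proof -
  have c1: "cm P1 Q1 = 1" using c11 d11 by simp
  have c2: "cm P2 Q2 = 0" using c22 d11 pp qq by simp
  from hom_one[OF hP1 hQ1 d11 c1] show ?thesis
  proof (elim disjE exE conjE)
    fix c assume c0: "c \<noteq> 0" and P1e: "P1 = monom [:c:] 1" and Q1e: "Q1 = [:[:0, inverse c:]:]"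
    have p1e: "p1 = -1" using cY_homog_deg[OF c0] hP1 P1e by simp
    have q1e: "q1 = 1" using d11 p1e by simp
    have ic0: "inverse c \<noteq> 0" using c0 by simp
    have "P2 = 0 \<and> inKY Q2"
    proof (cases "p1 + q2 = p2 + q1")
      case False
      have "cm P1 Q2 = 0" "cm P2 Q1 = 0" using cne[OF False] p1e q1e pp qq by auto
      then have k: "inKY Q2" and "degree P2 = 0"
        using cm_cY_zero[OF c0] cm_cX_zero[OF ic0] P1e Q1e by auto
      then have "P2 = 0" using KX_neg[OF hP2] pp p1e by simp
      then show ?thesis using k by simp
    next
      case True
      have "cm P1 Q2 + cm P2 Q1 = 0" using ceq[OF True] True p1e q1e pp by auto
      then have e: "smult [:c:] (mpd Q2) = - smult [:inverse c:] (pderiv P2)"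
        unfolding P1e Q1e cm_cY cm_cX by (simp add: eq_neg_iff_add_eq_0)
      have "P2 = 0"
      proof (rule ccontr)
        assume P20: "P2 \<noteq> 0"
        define \<alpha> where "\<alpha> = degree P2"
        have a1: "- p2 \<le> int \<alpha>" using homog_deg_ge[OF hP2 P20] unfolding \<alpha>_def by simp
        have p2le: "p2 \<le> -2" using pp p1e by simp
        have "degree (mpd Q2) = degree (pderiv P2)"
          using e c0 by (metis degree_minus degree_smult_eq ic0 pCons_eq_0_iff)
        then have dm: "degree (mpd Q2) = \<alpha> - 1" unfolding \<alpha>_def by (simp add: degree_pderiv)
        have "pderiv P2 \<noteq> 0" using a1 p2le by (simp add: pderiv_eq_0_iff \<alpha>_def)
        then have "mpd Q2 \<noteq> 0" using e ic0 by auto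
        then have Q20: "Q2 \<noteq> 0" by auto
        have b1: "\<alpha> - 1 \<le> degree Q2" using dm degree_mpd_le[of Q2] by simp
        have q2e: "q2 = p2 + 2" using True p1e q1e by simp
        have "int \<alpha> * (p2 + 2) \<noteq> int (degree Q2) * p2"
          by (rule ar_A1) (use p2le a1 b1 in auto)
        then have "cm P2 Q2 \<noteq> 0" using cm_homog_det(1)[OF hP2 hQ2 P20 Q20] q2e unfolding \<alpha>_def by simp
        then show False using c2 by simp
      qed
      then have "mpd Q2 = 0" using e c0 by simp
      then show ?thesis using \<open>P2 = 0\<close> mpd_eq_0_imp by blast
    qed
    then show ?thesis
      using FY[OF PQ c0, of 0 Q2] P1e Q1e by (simp add: add.commute)
  next
    fix c assume c0: "c \<noteq> 0" and P1e: "P1 = [:[:0, c:]:]" and Q1e: "Q1 = monom [:- inverse c:] 1"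
    have p1e: "p1 = 1" using cX_homog_deg[OF c0] hP1 P1e by simp
    have q1e: "q1 = -1" using d11 p1e by simp
    have ic0: "- inverse c \<noteq> 0" using c0 by simp
    have "Q2 = 0 \<and> inKY P2"
    proof (cases "p1 + q2 = p2 + q1")
      case False
      have "cm P1 Q2 = 0" "cm P2 Q1 = 0" using cne[OF False] p1e q1e pp qq by auto
      then have k: "inKY P2" and "degree Q2 = 0"
        using cm_cY_right_zero[OF ic0] cm_cX_left_zero[OF c0] P1e Q1e by auto
      then have "Q2 = 0" using KX_neg[OF hQ2] qq q1e by simp
      then show ?thesis using k by simp
    next
      case True
      have "cm P1 Q2 + cm P2 Q1 = 0" using ceq[OF True] True p1e q1e pp by auto
      then have e: "smult [:c:] (pderiv Q2) = smult [:inverse c:] (mpd P2)"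
        unfolding P1e Q1e cm_cX_left cm_cY_right smult_neg_const by (simp add: algebra_simps)
      have "Q2 = 0"
      proof (rule ccontr)
        assume Q20: "Q2 \<noteq> 0"
        define \<beta> where "\<beta> = degree Q2"
        have q2e: "q2 = p2 - 2" using True p1e q1e by simp
        have p2le: "p2 \<le> 0" using pp p1e by simp
        have b1: "- q2 \<le> int \<beta>" using homog_deg_ge[OF hQ2 Q20] unfolding \<beta>_def by simp
        have "degree (mpd P2) = degree (pderiv Q2)"
          using e c0 by (metis degree_smult_eq inverse_eq_iff_eq inverse_zero pCons_eq_0_iff)
        then have dm: "degree (mpd P2) = \<beta> - 1" unfolding \<beta>_def by (simp add: degree_pderiv)
        have "pderiv Q2 \<noteq> 0" using b1 q2e p2le by (simp add: pderiv_eq_0_iff \<beta>_def)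
        then have "mpd P2 \<noteq> 0" using e c0 by auto
        then have P20: "P2 \<noteq> 0" by auto
        have a1: "\<beta> - 1 \<le> degree P2" using dm degree_mpd_le[of P2] by simp
        have a2: "- p2 \<le> int (degree P2)" using homog_deg_ge[OF hP2 P20] by simp
        have "int (degree P2) * (p2 - 2) \<noteq> int \<beta> * p2"
          by (rule ar_A2) (use p2le a1 a2 b1 q2e in auto)
        then have "cm P2 Q2 \<noteq> 0" using cm_homog_det(1)[OF hP2 hQ2 P20 Q20] q2e unfolding \<beta>_def by simp
        then show False using c2 by simp
      qed
      then have "mpd P2 = 0" using e c0 by simp
      then show ?thesis using \<open>Q2 = 0\<close> mpd_eq_0_imp by blast
    qed
    then show ?thesis
      using FX[OF PQ c0, of P2 0] P1e Q1e by simp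
  qed
qed


lemma caseB:
  assumes d22: "p2 + q2 = 0"
  shows "goal_aut (P1 + P2) (Q1 + Q2)"
proof -
  have c2: "cm P2 Q2 = 1" using c22 d22 by simp
  have c1: "cm P1 Q1 = 0" using c11 d22 pp qq by simp
  from hom_one[OF hP2 hQ2 d22 c2] show ?thesis
  proof (elim disjE exE conjE)
    fix c assume c0: "c \<noteq> 0" and P2e: "P2 = monom [:c:] 1" and Q2e: "Q2 = [:[:0, inverse c:]:]"
    have p2e: "p2 = -1" using cY_homog_deg[OF c0] hP2 P2e by simp
    have q2e: "q2 = 1" using d22 p2e by simp
    have ic0: "inverse c \<noteq> 0" using c0 by simp
    have "degree P1 = 0 \<and> Q1 = 0"
    proof (cases "p1 + q2 = p2 + q1")
      case False
      have "cm P1 Q2 = 0" "cm P2 Q1 = 0" using cne[OF False] p2e q2e pp qq by auto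
      then have k: "inKY Q1" and d: "degree P1 = 0"
        using cm_cY_zero[OF c0] cm_cX_zero[OF ic0] P2e Q2e by auto
      then have "Q1 = 0" using KY_pos[OF hQ1] qq q2e by simp
      then show ?thesis using d by simp
    next
      case True
      have "cm P1 Q2 + cm P2 Q1 = 0" using ceq[OF True] True p2e q2e pp by auto
      then have e: "smult [:inverse c:] (pderiv P1) = - smult [:c:] (mpd Q1)"
        unfolding P2e Q2e cm_cY cm_cX by (simp add: eq_neg_iff_add_eq_0)
      have q1e: "q1 = p1 + 2" using True p2e q2e by simp
      have p1ge: "0 \<le> p1" using pp p2e by simp
      have "Q1 = 0"
      proof (rule ccontr)
        assume Q10: "Q1 \<noteq> 0"
        define \<beta> where "\<beta> = degree Q1"
        have dm: "degree (mpd Q1) = \<beta>" unfolding \<beta>_def by (rule mpd_exact[OF hQ1 Q10]) (use q1e p1ge in simp)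
        have "mpd Q1 \<noteq> 0"
        proof
          assume "mpd Q1 = 0"
          then have "Q1 = 0" using KY_pos[OF hQ1 mpd_eq_0_imp] q1e p1ge by simp
          then show False using Q10 by simp
        qed
        then have pd0: "pderiv P1 \<noteq> 0" using e c0 by auto
        have "degree (pderiv P1) = \<beta>"
          using e dm ic0 c0 by (metis degree_minus degree_smult_eq pCons_eq_0_iff)
        then have a: "degree P1 = \<beta> + 1" using pd0 by (simp add: degree_pderiv pderiv_eq_0_iff)
        have P10: "P1 \<noteq> 0" using pd0 by auto
        have "int (degree P1) * (p1 + 2) \<noteq> int \<beta> * p1" by (rule ar_B1) (use a p1ge in auto)
        then have "cm P1 Q1 \<noteq> 0" using cm_homog_det(1)[OF hP1 hQ1 P10 Q10] q1e unfolding \<beta>_def by simp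
        then show False using c1 by simp
      qed
      then have "pderiv P1 = 0" using e c0 by simp
      then show ?thesis using \<open>Q1 = 0\<close> pderiv_eq_0_imp by blast
    qed
    then show ?thesis
      using FY[OF PQ c0, of P1 0] P2e Q2e by (simp add: add.commute)
  next
    fix c assume c0: "c \<noteq> 0" and P2e: "P2 = [:[:0, c:]:]" and Q2e: "Q2 = monom [:- inverse c:] 1"
    have p2e: "p2 = 1" using cX_homog_deg[OF c0] hP2 P2e by simp
    have q2e: "q2 = -1" using d22 p2e by simp
    have ic0: "- inverse c \<noteq> 0" using c0 by simp
    have "P1 = 0 \<and> degree Q1 = 0"
    proof (cases "p1 + q2 = p2 + q1")
      case False
      have "cm P1 Q2 = 0" "cm P2 Q1 = 0" using cne[OF False] p2e q2e pp qq by auto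
      then have k: "inKY P1" and d: "degree Q1 = 0"
        using cm_cY_right_zero[OF ic0] cm_cX_left_zero[OF c0] P2e Q2e by auto
      then have "P1 = 0" using KY_pos[OF hP1] pp p2e by simp
      then show ?thesis using d by simp
    next
      case True
      have "cm P1 Q2 + cm P2 Q1 = 0" using ceq[OF True] True p2e q2e qq by auto
      then have e: "smult [:inverse c:] (mpd P1) = smult [:c:] (pderiv Q1)"
        unfolding P2e Q2e cm_cX_left cm_cY_right smult_neg_const by (simp add: algebra_simps)
      have p1e: "p1 = q1 + 2" using True p2e q2e by simp
      have q1ge: "0 \<le> q1" using qq q2e by simp
      have "P1 = 0"
      proof (rule ccontr)
        assume P10: "P1 \<noteq> 0"
        define \<alpha> where "\<alpha> = degree P1"
        have dm: "degree (mpd P1) = \<alpha>" unfolding \<alpha>_def by (rule mpd_exact[OF hP1 P10]) (use p1e q1ge in simp)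
        have "mpd P1 \<noteq> 0"
        proof
          assume "mpd P1 = 0"
          then have "P1 = 0" using KY_pos[OF hP1 mpd_eq_0_imp] p1e q1ge by simp
          then show False using P10 by simp
        qed
        then have pd0: "pderiv Q1 \<noteq> 0" using e c0 by auto
        have "degree (pderiv Q1) = \<alpha>"
          using e dm c0 by (metis degree_smult_eq inverse_eq_iff_eq inverse_zero pCons_eq_0_iff)
        then have b: "degree Q1 = \<alpha> + 1" using pd0 by (simp add: degree_pderiv pderiv_eq_0_iff)
        have Q10: "Q1 \<noteq> 0" using pd0 by auto
        have "int \<alpha> * q1 \<noteq> int (degree Q1) * (q1 + 2)" by (rule ar_B2) (use b q1ge in auto)
        then have "cm P1 Q1 \<noteq> 0" using cm_homog_det(1)[OF hP1 hQ1 P10 Q10] p1e unfolding \<alpha>_def by simp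
        then show False using c1 by simp
      qed
      then have "pderiv Q1 = 0" using e c0 by simp
      then show ?thesis using \<open>P1 = 0\<close> pderiv_eq_0_imp by blast
    qed
    then show ?thesis
      using FX[OF PQ c0, of 0 Q1] P2e Q2e by (simp add: add.commute)
  qed
qed

lemma caseC:
  assumes d12: "p1 + q2 = 0" and n11: "p1 + q1 \<noteq> 0" and n21: "p2 + q1 \<noteq> 0" and n22: "p2 + q2 \<noteq> 0"
  shows "goal_aut (P1 + P2) (Q1 + Q2)"
proof -
  have ne: "p1 + q2 \<noteq> p2 + q1" using d12 n21 by simp
  have s1: "cm P1 Q2 = 1" and s2: "cm P2 Q1 = 0" using cne[OF ne] d12 n21 by auto
  have c1: "cm P1 Q1 = 0" using c11 n11 by simp
  have c2: "cm P2 Q2 = 0" using c22 n22 by simp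
  from hom_one[OF hP1 hQ2 d12 s1] show ?thesis
  proof (elim disjE exE conjE)
    fix c assume c0: "c \<noteq> 0" and P1e: "P1 = monom [:c:] 1" and Q2e: "Q2 = [:[:0, inverse c:]:]"
    have p1e: "p1 = -1" using cY_homog_deg[OF c0] hP1 P1e by simp
    have q2e: "q2 = 1" using d12 p1e by simp
    have ic0: "inverse c \<noteq> 0" using c0 by simp
    have "inKY Q1" using cm_cY_zero[OF c0] c1 P1e by simp
    then have Q10: "Q1 = 0" using KY_pos[OF hQ1] qq q2e by simp
    have "degree P2 = 0" using cm_cX_zero[OF ic0] c2 Q2e by simp
    then have P20: "P2 = 0" using KX_neg[OF hP2] pp p1e by simp
    show ?thesis using FY[OF PQ c0, of 0 0] P1e Q2e P20 Q10 by simp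
  next
    fix c assume c0: "c \<noteq> 0" and P1e: "P1 = [:[:0, c:]:]" and Q2e: "Q2 = monom [:- inverse c:] 1"
    have ic0: "- inverse c \<noteq> 0" using c0 by simp
    have dQ1: "degree Q1 = 0" using cm_cX_left_zero[OF c0] c1 P1e by simp
    have kP2: "inKY P2" using cm_cY_right_zero[OF ic0] c2 Q2e by simp
    have "cm Q1 P2 = 0" using s2 cm_swap[of Q1 P2] by simp
    then have cond: "degree (coeff Q1 0) = 0 \<or> degree P2 = 0" by (rule KX_KY_commute[OF hQ1 dQ1 hP2 kP2])
    show ?thesis using FX[OF PQ c0, of P2 Q1] P1e Q2e dQ1 kP2 cond by (simp add: add.commute)
  qed
qed

lemma caseD:
  assumes d21: "p2 + q1 = 0" and n11: "p1 + q1 \<noteq> 0" and n12: "p1 + q2 \<noteq> 0" and n22: "p2 + q2 \<noteq> 0"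
  shows "goal_aut (P1 + P2) (Q1 + Q2)"
proof -
  have ne: "p1 + q2 \<noteq> p2 + q1" using d21 n12 by simp
  have s1: "cm P1 Q2 = 0" and s2: "cm P2 Q1 = 1" using cne[OF ne] d21 n12 by auto
  have c1: "cm P1 Q1 = 0" using c11 n11 by simp
  have c2: "cm P2 Q2 = 0" using c22 n22 by simp
  from hom_one[OF hP2 hQ1 d21 s2] show ?thesis
  proof (elim disjE exE conjE)
    fix c assume c0: "c \<noteq> 0" and P2e: "P2 = monom [:c:] 1" and Q1e: "Q1 = [:[:0, inverse c:]:]"
    have ic0: "inverse c \<noteq> 0" using c0 by simp
    have dP1: "degree P1 = 0" using cm_cX_zero[OF ic0] c1 Q1e by simp
    have kQ2: "inKY Q2" using cm_cY_zero[OF c0] c2 P2e by simp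
    have cond: "degree (coeff P1 0) = 0 \<or> degree Q2 = 0" by (rule KX_KY_commute[OF hP1 dP1 hQ2 kQ2 s1])
    show ?thesis using FY[OF PQ c0, of P1 Q2] P2e Q1e dP1 kQ2 cond by (simp add: add.commute)
  next
    fix c assume c0: "c \<noteq> 0" and P2e: "P2 = [:[:0, c:]:]" and Q1e: "Q1 = monom [:- inverse c:] 1"
    have p2e: "p2 = 1" using cX_homog_deg[OF c0] hP2 P2e by simp
    have q1e: "q1 = -1" using d21 p2e by simp
    have ic0: "- inverse c \<noteq> 0" using c0 by simp
    have "inKY P1" using cm_cY_right_zero[OF ic0] c1 Q1e by simp
    then have P10: "P1 = 0" using KY_pos[OF hP1] pp p2e by simp
    have "degree Q2 = 0" using cm_cX_left_zero[OF c0] c2 P2e by simp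
    then have Q20: "Q2 = 0" using KX_neg[OF hQ2] qq q1e by simp
    show ?thesis using FX[OF PQ c0, of 0 0] P2e Q1e P10 Q20 by simp
  qed
qed


lemma caseE_degen:
  assumes d12: "p1 + q2 = 0" and d21: "p2 + q1 = 0"
    and c1: "cm P1 Q1 = 0" and c2: "cm P2 Q2 = 0" and s: "cm P1 Q2 + cm P2 Q1 = 1"
    and z: "P1 = 0 \<or> Q2 = 0 \<or> P2 = 0 \<or> Q1 = 0"
  shows "goal_aut (P1 + P2) (Q1 + Q2)"
proof (cases "P1 = 0 \<or> Q2 = 0")
  case True
  then have s2: "cm P2 Q1 = 1" using s by auto
  from hom_one[OF hP2 hQ1 d21 s2] show ?thesis
  proof (elim disjE exE conjE)
    fix c assume c0: "c \<noteq> 0" and P2e: "P2 = monom [:c:] 1" and Q1e: "Q1 = [:[:0, inverse c:]:]"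
    have ic0: "inverse c \<noteq> 0" using c0 by simp
    have kQ2: "inKY Q2" using cm_cY_zero[OF c0] c2 P2e by simp
    have dP1: "degree P1 = 0" using cm_cX_zero[OF ic0] c1 Q1e by simp
    have cond: "degree (coeff P1 0) = 0 \<or> degree Q2 = 0" using True by auto
    show ?thesis using FY[OF PQ c0, of P1 Q2] P2e Q1e dP1 kQ2 cond by (simp add: add.commute)
  next
    fix c assume c0: "c \<noteq> 0" and P2e: "P2 = [:[:0, c:]:]" and Q1e: "Q1 = monom [:- inverse c:] 1"
    have ic0: "- inverse c \<noteq> 0" using c0 by simp
    have dQ2: "degree Q2 = 0" using cm_cX_left_zero[OF c0] c2 P2e by simp
    have kP1: "inKY P1" using cm_cY_right_zero[OF ic0] c1 Q1e by simp
    have cond: "degree (coeff Q2 0) = 0 \<or> degree P1 = 0" using True by auto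
    show ?thesis using FX[OF PQ c0, of P1 Q2] P2e Q1e dQ2 kP1 cond by (simp add: add.commute)
  qed
next
  case False
  then have True': "P2 = 0 \<or> Q1 = 0" using z by blast
  then have s1: "cm P1 Q2 = 1" using s by auto
  from hom_one[OF hP1 hQ2 d12 s1] show ?thesis
  proof (elim disjE exE conjE)
    fix c assume c0: "c \<noteq> 0" and P1e: "P1 = monom [:c:] 1" and Q2e: "Q2 = [:[:0, inverse c:]:]"
    have ic0: "inverse c \<noteq> 0" using c0 by simp
    have kQ1: "inKY Q1" using cm_cY_zero[OF c0] c1 P1e by simp
    have dP2: "degree P2 = 0" using cm_cX_zero[OF ic0] c2 Q2e by simp
    have cond: "degree (coeff P2 0) = 0 \<or> degree Q1 = 0" using True' by auto
    show ?thesis using FY[OF PQ c0, of P2 Q1] P1e Q2e dP2 kQ1 cond by (simp add: add.commute)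
  next
    fix c assume c0: "c \<noteq> 0" and P1e: "P1 = [:[:0, c:]:]" and Q2e: "Q2 = monom [:- inverse c:] 1"
    have ic0: "- inverse c \<noteq> 0" using c0 by simp
    have dQ1: "degree Q1 = 0" using cm_cX_left_zero[OF c0] c1 P1e by simp
    have kP2: "inKY P2" using cm_cY_right_zero[OF ic0] c2 Q2e by simp
    have cond: "degree (coeff Q1 0) = 0 \<or> degree P2 = 0" using True' by auto
    show ?thesis using FX[OF PQ c0, of P2 Q1] P1e Q2e dQ1 kP2 cond by (simp add: add.commute)
  qed
qed

lemma caseE:
  assumes d12: "p1 + q2 = 0" and d21: "p2 + q1 = 0"
  shows "goal_aut (P1 + P2) (Q1 + Q2)"
proof -
  have s: "cm P1 Q2 + cm P2 Q1 = 1" using ceq d12 d21 by simp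
  have c1: "cm P1 Q1 = 0" using c11 d12 qq by simp
  have c2: "cm P2 Q2 = 0" using c22 d21 qq by simp
  show ?thesis
  proof (cases "P1 = 0 \<or> Q2 = 0 \<or> P2 = 0 \<or> Q1 = 0")
    case True
    then show ?thesis by (rule caseE_degen[OF d12 d21 c1 c2 s])
  next
    case False
    then have P10: "P1 \<noteq> 0" and P20: "P2 \<noteq> 0" and Q10: "Q1 \<noteq> 0" and Q20: "Q2 \<noteq> 0" by auto
    define \<alpha>1 where "\<alpha>1 = degree P1"
    define \<alpha>2 where "\<alpha>2 = degree P2"
    define \<beta>1 where "\<beta>1 = degree Q1"
    define \<beta>2 where "\<beta>2 = degree Q2"
    have det11: "int \<alpha>1 * q1 = int \<beta>1 * p1"
      using cm_homog_det(1)[OF hP1 hQ1 P10 Q10] c1 unfolding \<alpha>1_def \<beta>1_def by blast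
    have det22: "int \<alpha>2 * q2 = int \<beta>2 * p2"
      using cm_homog_det(1)[OF hP2 hQ2 P20 Q20] c2 unfolding \<alpha>2_def \<beta>2_def by blast
    have g1: "0 \<le> p1 + int \<alpha>1" using homog_deg_ge[OF hP1 P10] unfolding \<alpha>1_def .
    have g2: "0 \<le> p2 + int \<alpha>2" using homog_deg_ge[OF hP2 P20] unfolding \<alpha>2_def .
    have g3: "0 \<le> q1 + int \<beta>1" using homog_deg_ge[OF hQ1 Q10] unfolding \<beta>1_def .
    have g4: "0 \<le> q2 + int \<beta>2" using homog_deg_ge[OF hQ2 Q20] unfolding \<beta>2_def .
    show ?thesis
    proof (cases "0 \<le> p2")
      case True
      have p1pos: "0 < p1" using True pp by simp
      have "int \<alpha>1 * q1 \<le> 0" using True d21 by (simp add: mult_nonneg_nonpos)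
      moreover have "0 \<le> int \<beta>1 * p1" using p1pos by simp
      ultimately have "int \<beta>1 * p1 = 0" using det11 by linarith
      then have b1: "\<beta>1 = 0" using p1pos by simp
      have "0 \<le> q1" using homog_deg0(2)[OF hQ1 _ Q10] b1 unfolding \<beta>1_def by simp
      then have q10: "q1 = 0" and p20: "p2 = 0" using True d21 by auto
      have cond: "degree (coeff Q1 0) = 0" using KX_zero[of Q1] hQ1 b1 q10 unfolding \<beta>1_def by simp
      have "cm P2 Q1 = 0" using homog0_commute hP2 hQ1 p20 q10 by simp
      then have s1: "cm P1 Q2 = 1" using s by simp
      from hom_one[OF hP1 hQ2 d12 s1] show ?thesis
      proof (elim disjE exE conjE)
        fix c assume c0: "c \<noteq> 0" and P1e: "P1 = monom [:c:] 1"
        then have "p1 = -1" using cY_homog_deg[OF c0] hP1 by simp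
        then show ?thesis using p1pos by simp
      next
        fix c assume c0: "c \<noteq> 0" and P1e: "P1 = [:[:0, c:]:]" and Q2e: "Q2 = monom [:- inverse c:] 1"
        have ic0: "- inverse c \<noteq> 0" using c0 by simp
        have kP2: "inKY P2" using cm_cY_right_zero[OF ic0] c2 Q2e by simp
        show ?thesis using FX[OF PQ c0, of P2 Q1] P1e Q2e b1 kP2 cond unfolding \<beta>1_def by (simp add: add.commute)
      qed
    next
      case p2neg: False
      show ?thesis
      proof (cases "p1 \<le> 0")
        case True
        have "0 \<le> int \<alpha>2 * q2" using True d12 by simp
        moreover have "int \<beta>2 * p2 \<le> 0" using p2neg by (simp add: mult_nonneg_nonpos)
        ultimately have z1: "int \<beta>2 * p2 = 0" and z2: "int \<alpha>2 * q2 = 0" using det22 by linarith+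
        have b2: "\<beta>2 = 0" using z1 p2neg by simp
        have "\<alpha>2 \<noteq> 0" using g2 p2neg by auto
        then have q20: "q2 = 0" using z2 by simp
        then have p10: "p1 = 0" using d12 by simp
        have dQ2: "degree Q2 = 0" using b2 unfolding \<beta>2_def .
        have dc: "degree (coeff Q2 0) = 0" using KX_zero[of Q2] hQ2 dQ2 q20 by simp
        have kQ2: "inKY Q2"
        proof
          fix j show "degree (coeff Q2 j) = 0" using dc dQ2 by (cases j) (auto simp: coeff_eq_0)
        qed
        have "cm P1 Q2 = 0" using homog0_commute hP1 hQ2 p10 q20 by simp
        then have s2: "cm P2 Q1 = 1" using s by simp
        from hom_one[OF hP2 hQ1 d21 s2] show ?thesis
        proof (elim disjE exE conjE)
          fix c assume c0: "c \<noteq> 0" and P2e: "P2 = monom [:c:] 1" and Q1e: "Q1 = [:[:0, inverse c:]:]"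
          have ic0: "inverse c \<noteq> 0" using c0 by simp
          have dP1: "degree P1 = 0" using cm_cX_zero[OF ic0] c1 Q1e by simp
          show ?thesis using FY[OF PQ c0, of P1 Q2] P2e Q1e dP1 kQ2 dQ2 by (simp add: add.commute)
        next
          fix c assume c0: "c \<noteq> 0" and P2e: "P2 = [:[:0, c:]:]"
          then have "p2 = 1" using cX_homog_deg[OF c0] hP2 by simp
          then show ?thesis using p2neg by simp
        qed
      next
        case False
        then have p1pos: "0 < p1" by simp
        define a where "a = p1"
        define b where "b = q1"
        have apos: "0 < a" and bpos: "0 < b" using p1pos p2neg d21 unfolding a_def b_def by auto
        have q2e: "q2 = - a" and p2e: "p2 = - b" using d12 d21 unfolding a_def b_def by auto
        have det12: "int \<alpha>1 * q2 \<noteq> int \<beta>2 * p1"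
        proof -
          have "int \<beta>2 * p1 > 0" using g4 q2e apos unfolding a_def by simp
          moreover have "int \<alpha>1 * q2 \<le> 0" using q2e apos by (simp add: mult_nonneg_nonpos)
          ultimately show ?thesis by linarith
        qed
        have det21: "int \<alpha>2 * q1 \<noteq> int \<beta>1 * p2"
        proof -
          have "int \<alpha>2 * q1 > 0" using g2 p2e bpos unfolding b_def by simp
          moreover have "int \<beta>1 * p2 \<le> 0" using p2e bpos by (simp add: mult_nonneg_nonpos)
          ultimately show ?thesis by linarith
        qed
        note X = cm_homog_det[OF hP1 hQ2 P10 Q20 det12[unfolded \<alpha>1_def \<beta>2_def]]
        note Y = cm_homog_det[OF hP2 hQ1 P20 Q10 det21[unfolded \<alpha>2_def \<beta>1_def]]
        have deq: "degree (cm P1 Q2) = degree (cm P2 Q1)"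
        proof (rule ccontr)
          assume ne: "degree (cm P1 Q2) \<noteq> degree (cm P2 Q1)"
          show False
          proof (cases "degree (cm P1 Q2) < degree (cm P2 Q1)")
            case True
            then have "degree (cm P1 Q2 + cm P2 Q1) = degree (cm P2 Q1)" by (rule degree_add_eq_right)
            then show False using s True by simp
          next
            case False
            then have "degree (cm P2 Q1) < degree (cm P1 Q2)" using ne by simp
            then have "degree (cm P1 Q2 + cm P2 Q1) = degree (cm P1 Q2)" by (rule degree_add_eq_left)
            then show False using s \<open>degree (cm P2 Q1) < degree (cm P1 Q2)\<close> by simp
          qed
        qed
        have sumeq: "\<alpha>1 + \<beta>2 = \<alpha>2 + \<beta>1"
          using deq X(2,3) Y(2,3) unfolding \<alpha>1_def \<alpha>2_def \<beta>1_def \<beta>2_def by simp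
        have ab: "a = b"
        proof (rule ar_E[of "int \<alpha>1" b "int \<beta>1" a "int \<alpha>2" "int \<beta>2"])
          show "int \<alpha>1 * b = int \<beta>1 * a" using det11 unfolding a_def b_def .
          show "int \<alpha>2 * a = int \<beta>2 * b" using det22 q2e p2e by simp
          show "int \<alpha>1 + int \<beta>2 = int \<alpha>2 + int \<beta>1" using sumeq by simp
          show "b \<le> int \<alpha>2" using g2 p2e by simp
        qed (use apos bpos in auto)
        have a0: "p1 \<noteq> 0" using apos a_def by simp
        have e1: "\<alpha>1 = \<beta>1" using det11 ab apos unfolding a_def b_def by simp
        have e2: "\<alpha>2 = \<beta>2" using det22 ab q2e p2e apos by simp
        have hQ1': "homog p1 Q1" using hQ1 ab unfolding a_def b_def by simp
        have hQ2': "homog p2 Q2" using hQ2 ab q2e p2e by simp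
        obtain l where l: "Q1 = smult [:l:] P1"
          using homog_prop[OF hP1 hQ1' a0 P10 _ c1] e1 unfolding \<alpha>1_def \<beta>1_def by metis
        have a20: "p2 \<noteq> 0" using p2neg by simp
        obtain m where m: "Q2 = smult [:m:] P2"
          using homog_prop[OF hP2 hQ2' a20 P20 _ c2] e2 unfolding \<alpha>2_def \<beta>2_def by metis
        have "cm P1 Q2 + cm P2 Q1 = smult [:m - l:] (cm P1 P2)"
          unfolding l m cm_smult_right cm_swap[of P2 P1] by (simp add: smult_const_diff)
        then have s3: "cm P1 (smult [:m - l:] P2) = 1" using s by (simp add: cm_smult_right)
        have hP2': "homog p2 (smult [:m - l:] P2)" by (rule homog_smult[OF hP2])
        have d12': "p1 + p2 = 0" using d12 q2e p2e ab by simp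
        from hom_one[OF hP1 hP2' d12' s3] show ?thesis
        proof (elim disjE exE conjE)
          fix c assume c0: "c \<noteq> 0" and P1e: "P1 = monom [:c:] 1"
          then have "p1 = -1" using cY_homog_deg[OF c0] hP1 by simp
          then show ?thesis using p1pos by simp
        next
          fix c assume c0: "c \<noteq> 0" and P1e: "P1 = [:[:0, c:]:]"
            and P2e: "smult [:m - l:] P2 = monom [:- inverse c:] 1"
          have ml: "m - l \<noteq> 0" using P2e c0 by auto
          define e where "e = - inverse c / (m - l)"
          have P2e': "P2 = monom [:e:] 1"
          proof -
            have "P2 = smult [:inverse (m - l):] (smult [:m - l:] P2)" using ml by (simp flip: one_pCons)
            also have "\<dots> = monom [:e:] 1" unfolding P2e e_def by (simp add: smult_monom field_simps)
            finally show ?thesis .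
          qed
          have e0: "e \<noteq> 0" using c0 ml unfolding e_def by simp
          have Pe: "P1 + P2 = [:[:0, c:]:] + monom [:e:] 1" using P1e P2e' by simp
          have Qe: "Q1 + Q2 = [:[:0, c * l:]:] + monom [:e * m:] 1"
            unfolding l m P1e P2e' by (simp add: smult_monom)
          have "c * (e * m) - c * l * e = c * e * (m - l)" by (simp add: algebra_simps)
          then have dl: "c * (e * m) - c * l * e \<noteq> 0" using c0 e0 ml by simp
          show ?thesis unfolding goal_aut_def by (rule formL[OF PQ dl Pe Qe])
        qed
      qed
    qed
  qed
qed

lemma main: "goal_aut (P1 + P2) (Q1 + Q2)"
proof (cases "p1 + q1 = 0")
  case True then show ?thesis by (rule caseA)
next
  case n11: False
  show ?thesis
  proof (cases "p2 + q2 = 0")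
    case True then show ?thesis by (rule caseB)
  next
    case n22: False
    show ?thesis
    proof (cases "p1 + q2 = 0")
      case d12: True
      show ?thesis
      proof (cases "p2 + q1 = 0")
        case True then show ?thesis by (rule caseE[OF d12])
      next
        case False show ?thesis by (rule caseC[OF d12 n11 False n22])
      qed
    next
      case n12: False
      then have "p2 + q1 = 0" using some_zero n11 n22 by blast
      then show ?thesis by (rule caseD[OF _ n11 n12 n22])
    qed
  qed
qed

end



theorem theorem1p1:
  fixes P Q :: "'a::field_char_0 poly poly"
  assumes "weyl_mass P \<le> 2" and "weyl_mass Q \<le> 2"
    and "weyl_mult P Q - weyl_mult Q P = 1"
  shows "\<exists>\<tau>. weyl_aut \<tau> \<and> P = \<tau> weyl_Y \<and> Q = \<tau> weyl_X"
proof -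
  obtain p1 p2 P1 P2 where p: "p2 < p1" "homog p1 P1" "homog p2 P2" "P = P1 + P2"
    using mass_decomp[OF assms(1)] by blast
  obtain q1 q2 Q1 Q2 where q: "q2 < q1" "homog q1 Q1" "homog q2 Q2" "Q = Q1 + Q2"
    using mass_decomp[OF assms(2)] by blast
  have PQ: "cm (P1 + P2) (Q1 + Q2) = 1" using assms(3) p(4) q(4) by (simp add: cm_def)
  interpret clsf P1 P2 Q1 Q2 p1 p2 q1 q2
    by unfold_locales (use p q PQ in auto)
  show ?thesis using main p(4) q(4) unfolding goal_aut_def by simp
qed

end
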